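(* A bijective real-linear map $T\colon M_2(\mathbb F)\to M_2(\mathbb F)$ maps $\mathcal U_2(\mathbb F)$ into $\mathbb F\,\mathcal U_2(\mathbb F)$ if and only if $T(I)$ is a nonzero multiple of a matrix in $\mathcal U_2(\mathbb F)$ and the map $L(X)=T(I)^{-1}T(X)$ satisfies one of: (i) $\mathbb F=\mathbb R$ and $L(\mathbf V_1)=\mathbf V_1$, $L(\mathbf V_2)=\mathbf V_2$; (ii) $\mathbb F=\mathbb C$ and there are $U,V\in\mathcal U_2(\mathbb C)$ and $\mu\in\mathbb C\setminus\mathbb R$ such that the (unital) map $L'(X)=VL(UXU^* )V^*$ satisfies $L'(iI)=\mu I$ and, for $j=1,2,3$, $$L'(\Sigma_j)=a_j\Sigma_j+b_jI,\qquad L'(i\Sigma_j)=\mu L'(\Sigma_j),$$ for some real $a_1,a_2,a_3,b_1,b_2,b_3$ with $a_1\ge a_2\ge|a_3|>0$. Moreover, if in case (ii) $T$ is complex-linear then $\mu=i$.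
   Context: $\mathbb F$ is $\mathbb C$ or $\mathbb R$; $\mathcal U_2(\mathbb F)=\{A\in M_2(\mathbb F):A^*A=I\}$ with $A^*$ the conjugate transpose (transpose if real); $\mathbb F\,\mathcal U_2(\mathbb F)=\{\gamma U:\gamma\in\mathbb F, U\in\mathcal U_2(\mathbb F)\}$. $E_{ij}$ denotes the matrix unit. $\mathbf V_1=\mathrm{Span}_{\mathbb R}\{I_2,E_{12}-E_{21}\}$, $\mathbf V_2=\mathrm{Span}_{\mathbb R}\{E_{11}-E_{22},E_{12}+E_{21}\}$ (subspaces of $M_2(\mathbb R)$). $\Sigma_1=\begin{pmatrix}0&i\\ i&0\end{pmatrix}$, $\Sigma_2=\begin{pmatrix}0&1\\-1&0\end{pmatrix}$, $\Sigma_3=\begin{pmatrix}i&0\\0&-i\end{pmatrix}$. *)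

theory Defs
  imports "HOL-Analysis.Analysis"
begin

definition cadj :: "complex^2^2 \<Rightarrow> complex^2^2" where
  "cadj A = (\<chi> i j. cnj (A $ j $ i))"

definition csmult :: "complex \<Rightarrow> complex^2^2 \<Rightarrow> complex^2^2" where
  "csmult c A = (\<chi> i j. c * A $ i $ j)"

definition U2R :: "(real^2^2) set" where
  "U2R = {A. transpose A ** A = mat 1}"

definition FU2R :: "(real^2^2) set" where
  "FU2R = {\<gamma> *\<^sub>R U | \<gamma> U. U \<in> U2R}"

definition U2C :: "(complex^2^2) set" where
  "U2C = {A. cadj A ** A = mat 1}"

definition FU2C :: "(complex^2^2) set" where
  "FU2C = {csmult \<gamma> U | \<gamma> U. U \<in> U2C}"

definition Eunit :: "2 \<Rightarrow> 2 \<Rightarrow> real^2^2" where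
  "Eunit i j = (\<chi> a b. if a = i \<and> b = j then 1 else 0)"

definition V1 :: "(real^2^2) set" where
  "V1 = span {mat 1, Eunit 1 2 - Eunit 2 1}"

definition V2 :: "(real^2^2) set" where
  "V2 = span {Eunit 1 1 - Eunit 2 2, Eunit 1 2 + Eunit 2 1}"

definition Sig :: "nat \<Rightarrow> complex^2^2" where
  "Sig j = (if j = 1 then vector [vector [0, \<i>], vector [\<i>, 0]]
              else if j = 2 then vector [vector [0, 1], vector [-1, 0]]
              else vector [vector [\<i>, 0], vector [0, -\<i>]])"

definition complex_linear :: "(complex^2^2 \<Rightarrow> complex^2^2) \<Rightarrow> bool" where
  "complex_linear T \<longleftrightarrow> linear T \<and> (\<forall>c X. T (csmult c X) = csmult c (T X))"

definition caseII :: "(complex^2^2 \<Rightarrow> complex^2^2) \<Rightarrow> complex^2^2 \<Rightarrow> complex^2^2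
   \<Rightarrow> complex \<Rightarrow> (nat \<Rightarrow> real) \<Rightarrow> (nat \<Rightarrow> real) \<Rightarrow> bool" where
  "caseII L U V \<mu> a b \<longleftrightarrow>
     U \<in> U2C \<and> V \<in> U2C \<and> \<mu> \<notin> \<real> \<and>
     (let L' = (\<lambda>X. V ** L (U ** X ** cadj U) ** cadj V) in
        L' (csmult \<i> (mat 1)) = csmult \<mu> (mat 1) \<and>
        (\<forall>j\<in>{1,2,3}. L' (Sig j) = a j *\<^sub>R Sig j + b j *\<^sub>R mat 1 \<and>
                       L' (csmult \<i> (Sig j)) = csmult \<mu> (L' (Sig j)))) \<and>
     a 1 \<ge> a 2 \<and> a 2 \<ge> \<bar>a 3\<bar> \<and> \<bar>a 3\<bar> > 0"

end

theory Submission
  imports Defs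
begin

lemma mat2_eq: "(A::'a^2^2) = B \<longleftrightarrow> A$1$1 = B$1$1 \<and> A$1$2 = B$1$2 \<and> A$2$1 = B$2$1 \<and> A$2$2 = B$2$2"
  by (auto simp: vec_eq_iff forall_2)

lemma mmult2 [simp]: "((A::'a::semiring_1^2^2) ** B) $ i $ j = A$i$1 * B$1$j + A$i$2 * B$2$j"
  by (simp add: matrix_matrix_mult_def sum_2)

definition q4 :: "real \<Rightarrow> real \<Rightarrow> real \<Rightarrow> real \<Rightarrow> real^4" where
  "q4 a b c d = (\<chi> i. if i = 1 then a else if i = 2 then b else if i = 3 then c else d)"

lemma q4_nth [simp]: "q4 a b c d $ 1 = a" "q4 a b c d $ 2 = b" "q4 a b c d $ 3 = c" "q4 a b c d $ 4 = d"
  by (simp_all add: q4_def)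

lemma vec4_eq: "(x::'a^4) = y \<longleftrightarrow> x$1 = y$1 \<and> x$2 = y$2 \<and> x$3 = y$3 \<and> x$4 = y$4"
  by (auto simp: vec_eq_iff forall_4)

definition qm :: "real^4 \<Rightarrow> complex^2^2" where
  "qm x = vector [vector [Complex (x$1) (x$4), Complex (x$3) (x$2)],
                  vector [Complex (-(x$3)) (x$2), Complex (x$1) (-(x$4))]]"

lemma qm_nth [simp]: "qm x $ 1 $ 1 = Complex (x$1) (x$4)" "qm x $ 1 $ 2 = Complex (x$3) (x$2)"
  "qm x $ 2 $ 1 = Complex (-(x$3)) (x$2)" "qm x $ 2 $ 2 = Complex (x$1) (-(x$4))"
  by (simp_all add: qm_def)

definition qmul :: "real^4 \<Rightarrow> real^4 \<Rightarrow> real^4" where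
  "qmul x y = q4 (x$1*y$1 - x$2*y$2 - x$3*y$3 - x$4*y$4)
                 (x$1*y$2 + x$2*y$1 - x$3*y$4 + x$4*y$3)
                 (x$1*y$3 + x$3*y$1 + x$2*y$4 - x$4*y$2)
                 (x$1*y$4 + x$4*y$1 - x$2*y$3 + x$3*y$2)"

definition qcnj :: "real^4 \<Rightarrow> real^4" where
  "qcnj x = q4 (x$1) (-(x$2)) (-(x$3)) (-(x$4))"

lemma qm_mult: "qm x ** qm y = qm (qmul x y)"
  by (simp add: mat2_eq qmul_def complex_eq_iff algebra_simps)

lemma cadj_nth [simp]: "cadj A $ i $ j = cnj (A $ j $ i)"
  by (simp add: cadj_def)

lemma qm_cadj: "cadj (qm x) = qm (qcnj x)"
  by (simp add: mat2_eq qcnj_def complex_eq_iff)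

lemma qmul_assoc: "qmul (qmul x y) z = qmul x (qmul y z)"
  by (simp add: vec4_eq qmul_def algebra_simps)

lemma Sig_qm: "Sig 1 = qm (axis 2 1)" "Sig 2 = qm (axis 3 1)" "Sig 3 = qm (axis 4 1)" "mat 1 = qm (axis 1 1)"
  by (simp_all add: mat2_eq Sig_def axis_def mat_def complex_eq_iff)


definition nsq :: "real^4 \<Rightarrow> real" where
  "nsq x = x$1^2 + x$2^2 + x$3^2 + x$4^2"

lemma inner4: "inner (x::real^4) y = x$1*y$1 + x$2*y$2 + x$3*y$3 + x$4*y$4"
  by (simp add: inner_vec_def sum_4)

lemma norm4: "(norm (x::real^4))^2 = nsq x"
  by (simp only: power2_norm_eq_inner) (simp add: inner4 nsq_def power2_eq_square)

definition rot :: "real^4 \<Rightarrow> real^4 \<Rightarrow> real^4" where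
  "rot u x = qmul (qmul u x) (qcnj u)"

abbreviation e1 :: "real^4" where "e1 \<equiv> axis 1 1"
abbreviation e2 :: "real^4" where "e2 \<equiv> axis 2 1"
abbreviation e3 :: "real^4" where "e3 \<equiv> axis 3 1"
abbreviation e4 :: "real^4" where "e4 \<equiv> axis 4 1"

lemma axis4: "(axis 1 1 :: real^4) = q4 1 0 0 0" "(axis 2 1 :: real^4) = q4 0 1 0 0"
  "(axis 3 1 :: real^4) = q4 0 0 1 0" "(axis 4 1 :: real^4) = q4 0 0 0 1"
  by (simp_all add: vec4_eq axis_def)

lemma q4_ops [simp]: "q4 a b c d + q4 a' b' c' d' = q4 (a+a') (b+b') (c+c') (d+d')"
  "r *\<^sub>R q4 a b c d = q4 (r*a) (r*b) (r*c) (r*d)"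
  "q4 a b c d - q4 a' b' c' d' = q4 (a-a') (b-b') (c-c') (d-d')"
  "- q4 a b c d = q4 (-a) (-b) (-c) (-d)"
  by (simp_all add: vec4_eq)

lemma q4_eta: "x = q4 (x$1) (x$2) (x$3) (x$4)"
  by (simp add: vec4_eq)

lemma q4_eq_iff [simp]: "q4 a b c d = q4 a' b' c' d' \<longleftrightarrow> a = a' \<and> b = b' \<and> c = c' \<and> d = d'"
  by (simp add: vec4_eq)

lemma qcnj_qmul: "qcnj (qmul x y) = qmul (qcnj y) (qcnj x)"
  by (simp add: qcnj_def qmul_def algebra_simps)

lemma qmul_qcnj: "qmul x (qcnj x) = nsq x *\<^sub>R e1" "qmul (qcnj x) x = nsq x *\<^sub>R e1"
  by (simp_all add: qcnj_def qmul_def nsq_def power2_eq_square algebra_simps axis4)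

lemma nsq_qmul: "nsq (qmul x y) = nsq x * nsq y"
  by (simp add: qmul_def nsq_def power2_eq_square algebra_simps)

lemma qmul_e1 [simp]: "qmul e1 x = x" "qmul x e1 = x"
  by (simp_all add: qmul_def vec4_eq axis4)

lemma qmul_scaleR: "qmul x (r *\<^sub>R y) = r *\<^sub>R qmul x y" "qmul (r *\<^sub>R x) y = r *\<^sub>R qmul x y"
  by (simp_all add: qmul_def vec4_eq algebra_simps)

lemma rot_qmul: "rot (qmul a b) x = rot a (rot b x)"
  unfolding rot_def by (simp add: qcnj_qmul qmul_assoc)

lemma rot_inner: "inner (rot u x) (rot u y) = (nsq u)^2 * inner x y"
  unfolding rot_def by (simp add: inner4 qmul_def qcnj_def nsq_def power2_eq_square algebra_simps)

lemma rot_1: "(rot u x)$1 = nsq u * x$1"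
  unfolding rot_def by (simp add: qmul_def qcnj_def nsq_def power2_eq_square algebra_simps)

lemma nsq_inner: "nsq x = inner x x"
  by (simp add: nsq_def inner4 power2_eq_square)

lemma nsq_nonneg: "nsq x \<ge> 0"
  by (simp add: nsq_def)

lemma nsq_eq_0: "nsq x = 0 \<longleftrightarrow> x = 0"
  by (simp add: nsq_def vec4_eq sum_power2_eq_zero_iff add_nonneg_eq_0_iff)

lemma rot_scale: "rot (c *\<^sub>R u) x = (c^2) *\<^sub>R rot u x"
  unfolding rot_def by (simp add: qmul_def qcnj_def vec4_eq power2_eq_square algebra_simps)

lemma nsq_scale: "nsq (c *\<^sub>R u) = c^2 * nsq u"
  by (simp add: nsq_def power2_eq_square algebra_simps)

lemma rot_I1:
  assumes "a$1 = 0" "b$1 = 0"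
  shows "rot (e1 - qmul b a) a = (2*nsq a*inner a b + 2*nsq a) *\<^sub>R b + (1 - nsq a * nsq b) *\<^sub>R a"
  unfolding vec4_eq using assms by (simp add: rot_def qmul_def qcnj_def nsq_def inner4 power2_eq_square algebra_simps axis4)

lemma nsq_I5:
  assumes "a$1 = 0" "b$1 = 0"
  shows "nsq (e1 - qmul b a) = 1 + 2 * inner a b + nsq a * nsq b"
  using assms by (simp add: qmul_def nsq_def inner4 power2_eq_square algebra_simps axis4)

lemma comm_I2:
  assumes "a$1 = 0" "b$1 = 0" "c$1 = 0"
  shows "qmul (qmul b a) c = qmul c (qmul b a) + (2 * inner b c) *\<^sub>R a - (2 * inner a c) *\<^sub>R b"
  unfolding vec4_eq using assms by (simp add: qmul_def inner4 algebra_simps)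

lemma rot_I3:
  assumes "a$1 = 0" "c$1 = 0"
  shows "rot c a = (2 * inner a c) *\<^sub>R c - nsq c *\<^sub>R a"
  unfolding vec4_eq using assms by (simp add: rot_def qmul_def qcnj_def nsq_def inner4 power2_eq_square algebra_simps axis4)

lemma rot_linear: "linear (rot u)"
  by (rule linearI) (simp_all add: rot_def qmul_def qcnj_def vec4_eq algebra_simps)

lemma rot_add: "rot u (x + y) = rot u x + rot u y"
  using rot_linear by (simp add: linear_add)
lemma rot_scaleR: "rot u (c *\<^sub>R x) = c *\<^sub>R rot u x"
  using rot_linear by (simp add: linear_scale)
lemma rot_diff: "rot u (x - y) = rot u x - rot u y"
  using rot_linear by (simp add: linear_diff)

lemma rot_e1: "rot u e1 = nsq u *\<^sub>R e1"
  unfolding rot_def by (simp add: qmul_qcnj)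

lemma rot_e1u: "rot e1 x = x"
  by (simp add: rot_def qcnj_def axis4 qmul_def vec4_eq)

lemma rot_inv: "nsq u = 1 \<Longrightarrow> rot (qcnj u) (rot u x) = x"
  by (simp add: rot_qmul[symmetric] qmul_qcnj rot_scale rot_e1u)

lemma rot_inv': "nsq u = 1 \<Longrightarrow> rot u (rot (qcnj u) x) = x"
  by (simp add: rot_qmul[symmetric] qmul_qcnj rot_scale rot_e1u)

lemma nsq_qcnj: "nsq (qcnj u) = nsq u"
  by (simp add: nsq_def qcnj_def)

lemma nsq_rot: "nsq u = 1 \<Longrightarrow> nsq (rot u x) = nsq x"
  by (simp add: nsq_inner rot_inner)

lemma inner_rot: "nsq u = 1 \<Longrightarrow> inner (rot u x) (rot u y) = inner x y"
  by (simp add: rot_inner)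

lemma pure_rot: "x$1 = 0 \<Longrightarrow> (rot u x)$1 = 0"
  by (simp add: rot_1)

lemma normalize_rot:
  assumes "nsq u0 > 0" "rot u0 a = nsq u0 *\<^sub>R b" "rot u0 c = nsq u0 *\<^sub>R c"
  shows "\<exists>u. nsq u = 1 \<and> rot u a = b \<and> rot u c = c"
proof -
  define u where "u = (1 / sqrt (nsq u0)) *\<^sub>R u0"
  have sq: "(1 / sqrt (nsq u0))^2 = 1 / nsq u0" using assms(1) by (simp add: power_divide)
  have "nsq u = 1" unfolding u_def nsq_scale sq using assms(1) by simp
  moreover have "rot u a = b" unfolding u_def rot_scale sq assms(2) using assms(1) by simp
  moreover have "rot u c = c" unfolding u_def rot_scale sq assms(3) using assms(1) by simp
  ultimately show ?thesis by blast
qed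

lemma rot_pair:
  assumes pa: "a$1 = 0" and pb: "b$1 = 0" and pc: "c$1 = 0"
    and na: "nsq a = 1" and nb: "nsq b = 1" and nc: "nsq c = 1"
    and ca: "inner c a = 0" and cb: "inner c b = 0"
  shows "\<exists>u. nsq u = 1 \<and> rot u a = b \<and> rot u c = c"
proof (cases "inner a b = -1")
  case True
  have "nsq (a + b) = nsq a + nsq b + 2 * inner a b"
    by (simp add: nsq_inner inner_add_left inner_add_right inner_commute)
  also have "\<dots> = 0" using True na nb by simp
  finally have "a + b = 0" by (simp add: nsq_eq_0)
  then have b: "b = - a" by (simp add: eq_neg_iff_add_eq_0 add.commute)
  have "rot c a = b" using rot_I3[OF pa pc] ca nc b by (simp add: inner_commute)
  moreover have "rot c c = 2 *\<^sub>R c - c" using rot_I3[OF pc pc] nc by (simp add: nsq_inner[symmetric])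
  then have "rot c c = c" by (simp add: scaleR_2)
  ultimately show ?thesis using nc by blast
next
  case False
  define u0 where "u0 = e1 - qmul b a"
  have n0: "nsq u0 = 2 + 2 * inner a b" unfolding u0_def using nsq_I5[OF pa pb] na nb by simp
  have "nsq u0 \<noteq> 0" using n0 False by simp
  then have pos: "nsq u0 > 0" using nsq_nonneg[of u0] by simp
  have r1: "rot u0 a = nsq u0 *\<^sub>R b" unfolding u0_def using rot_I1[OF pa pb] na nb n0 u0_def
    by (simp add: algebra_simps)
  have cm: "qmul u0 c = qmul c u0"
    unfolding u0_def using comm_I2[OF pa pb pc] ca cb pa pb pc
    by (simp add: qmul_def vec4_eq inner_commute algebra_simps axis4)
  have "rot u0 c = qmul (qmul c u0) (qcnj u0)" unfolding rot_def cm ..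
  also have "\<dots> = nsq u0 *\<^sub>R c" by (simp add: qmul_assoc qmul_qcnj qmul_scaleR)
  finally have r2: "rot u0 c = nsq u0 *\<^sub>R c" .
  show ?thesis by (rule normalize_rot[OF pos r1 r2])
qed

lemma one_vec:
  assumes pb: "b$1 = 0" and nb: "nsq b = 1"
  shows "\<exists>u. nsq u = 1 \<and> rot u e2 = b"
proof (cases "inner e2 b = -1")
  case True
  have pa: "(e2::real^4)$1 = 0" and na: "nsq e2 = 1" by (simp_all add: axis4 nsq_def)
  have "nsq (e2 + b) = nsq e2 + nsq b + 2 * inner e2 b"
    by (simp add: nsq_inner inner_add_left inner_add_right inner_commute)
  also have "\<dots> = 0" using True na nb by simp
  finally have "e2 + b = 0" by (simp add: nsq_eq_0)
  then have b: "b = - e2" by (simp add: eq_neg_iff_add_eq_0 add.commute)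
  have "rot e3 e2 = b" using rot_I3[of e2 e3] b by (simp add: axis4 inner4 nsq_def)
  moreover have "nsq e3 = 1" by (simp add: axis4 nsq_def)
  ultimately show ?thesis by blast
next
  case False
  have pa: "(e2::real^4)$1 = 0" and na: "nsq e2 = 1" by (simp_all add: axis4 nsq_def)
  define u0 where "u0 = e1 - qmul b e2"
  have n0: "nsq u0 = 2 + 2 * inner e2 b" unfolding u0_def using nsq_I5[OF pa pb] na nb by simp
  have "nsq u0 \<noteq> 0" using n0 False by simp
  then have pos: "nsq u0 > 0" using nsq_nonneg[of u0] by simp
  have r1: "rot u0 e2 = nsq u0 *\<^sub>R b" unfolding u0_def using rot_I1[OF pa pb] na nb n0 u0_def
    by (simp add: algebra_simps)
  have r2: "rot u0 e1 = nsq u0 *\<^sub>R e1" by (rule rot_e1)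
  show ?thesis using normalize_rot[OF pos r1 r2] by blast
qed

lemma frame:
  assumes p1: "f1$1 = 0" and p2: "f2$1 = 0" and n1: "nsq f1 = 1" and n2: "nsq f2 = 1"
    and o12: "inner f1 f2 = 0"
  shows "\<exists>u. nsq u = 1 \<and> rot u e2 = f1 \<and> rot u e3 = f2"
proof -
  obtain u1 where u1: "nsq u1 = 1" "rot u1 e2 = f1" using one_vec[OF p1 n1] by blast
  define g where "g = rot u1 e3"
  have pg: "g$1 = 0" unfolding g_def by (rule pure_rot) (simp add: axis4)
  have "nsq g = nsq e3" unfolding g_def using u1 by (simp add: nsq_rot)
  then have ng: "nsq g = 1" by (simp add: nsq_def axis4)
  have "inner f1 g = inner (rot u1 e2) (rot u1 e3)" using u1(2) g_def by simp
  also have "\<dots> = inner e2 e3" by (rule inner_rot[OF u1(1)])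
  also have "\<dots> = 0" by (simp add: axis4 inner4)
  finally have gf1: "inner f1 g = 0" .
  have f2f1: "inner f1 f2 = 0" by fact
  obtain u2 where u2: "nsq u2 = 1" "rot u2 g = f2" "rot u2 f1 = f1"
    using rot_pair[OF pg p2 p1 ng n2 n1 gf1 f2f1] by blast
  define u where "u = qmul u2 u1"
  have "nsq u = 1" unfolding u_def by (simp add: nsq_qmul u1 u2)
  moreover have "rot u e2 = f1" unfolding u_def rot_qmul u1(2) u2(3) ..
  moreover have "rot u e3 = f2" unfolding u_def rot_qmul g_def[symmetric] u2(2) ..
  ultimately show ?thesis by blast
qed


lemma lagrange:
  fixes N :: "real^4 \<Rightarrow> real^4"
  assumes lin: "linear N" and sP: "subspace P" and fP: "f \<in> P"
    and bound: "\<And>x. x \<in> P \<Longrightarrow> inner (N x) (N x) \<le> lam * inner x x"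
    and eq: "inner (N f) (N f) = lam * inner f f"
    and yP: "y \<in> P"
  shows "inner (N f) (N y) = lam * inner f y"
proof -
  define d where "d = inner (N f) (N y) - lam * inner f y"
  define e where "e = inner (N y) (N y) - lam * inner y y"
  have key: "2 * t * d + t^2 * e \<le> 0" for t
  proof -
    have "f + t *\<^sub>R y \<in> P" using sP fP yP by (simp add: subspace_add subspace_scale)
    then have "inner (N (f + t *\<^sub>R y)) (N (f + t *\<^sub>R y)) \<le> lam * inner (f + t *\<^sub>R y) (f + t *\<^sub>R y)"
      by (rule bound)
    moreover have "N (f + t *\<^sub>R y) = N f + t *\<^sub>R N y" using lin by (simp add: linear_add linear_scale)
    ultimately have "inner (N f + t *\<^sub>R N y) (N f + t *\<^sub>R N y) \<le> lam * inner (f + t *\<^sub>R y) (f + t *\<^sub>R y)"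
      by simp
    then show ?thesis unfolding d_def e_def using eq
      by (simp add: inner_add_left inner_add_right inner_commute power2_eq_square algebra_simps)
  qed
  show ?thesis
  proof (rule ccontr)
    assume "inner (N f) (N y) \<noteq> lam * inner f y"
    then have dn: "d \<noteq> 0" unfolding d_def by simp
    define k where "k = \<bar>e\<bar> + 1"
    define t where "t = d / k"
    have pos: "k > 0" unfolding k_def by simp
    have "2 * t * d + t^2 * e \<le> 0" by (rule key)
    then have "(2 * t * d + t^2 * e) * k^2 \<le> 0"
      by (simp add: mult_nonpos_nonneg)
    moreover have "(2 * t * d + t^2 * e) * k^2 = d^2 * (2 * k + e)"
      unfolding t_def using pos by (simp add: field_simps power2_eq_square)
    ultimately have "d^2 * (2 * k + e) \<le> 0" by simp
    moreover have "2 * k + e > 0" unfolding k_def by (simp add: abs_if)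
    moreover have "d^2 > 0" using dn by simp
    ultimately show False by (simp add: mult_le_0_iff)
  qed
qed

lemma max_on:
  fixes N :: "real^4 \<Rightarrow> real^4"
  assumes "linear N" "compact S" "S \<noteq> {}"
  shows "\<exists>f\<in>S. \<forall>y\<in>S. inner (N y) (N y) \<le> inner (N f) (N f)"
proof -
  have "bounded_linear N" using assms(1) by (simp add: linear_conv_bounded_linear)
  then have "continuous_on S N" by (rule linear_continuous_on)
  then have "continuous_on S (\<lambda>x. inner (N x) (N x))" by (intro continuous_intros)
  then show ?thesis using continuous_attains_sup[OF assms(2,3)] by blast
qed

lemma bound_scale:
  fixes N :: "real^4 \<Rightarrow> real^4"
  assumes lin: "linear N" and sP: "subspace P"
    and h: "\<And>y. y \<in> P \<Longrightarrow> norm y = 1 \<Longrightarrow> inner (N y) (N y) \<le> lam"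
    and xP: "x \<in> P"
  shows "inner (N x) (N x) \<le> lam * inner x x"
proof (cases "x = 0")
  case True
  then show ?thesis using lin by (simp add: linear_0)
next
  case False
  define y where "y = (1 / norm x) *\<^sub>R x"
  have "y \<in> P" unfolding y_def using sP xP by (simp add: subspace_scale)
  moreover have "norm y = 1" unfolding y_def using False by simp
  ultimately have "inner (N y) (N y) \<le> lam" by (rule h)
  moreover have "inner (N y) (N y) = inner (N x) (N x) / (norm x)^2"
    unfolding y_def using lin by (simp add: linear_scale power2_eq_square)
  moreover have "inner x x = (norm x)^2" by (simp add: power2_norm_eq_inner)
  moreover have "(norm x)^2 > 0" using False by simp
  ultimately show ?thesis by (simp add: field_simps)
qed

lemma subspace_pure: "subspace {x::real^4. x$1 = 0}"
  by (auto simp: subspace_def)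

lemma subspace_pure2: "subspace {x::real^4. x$1 = 0 \<and> inner f x = 0}"
  by (auto simp: subspace_def inner_add_right)

lemma compact_S1: "compact ({x::real^4. inner e1 x = 0} \<inter> sphere 0 1)"
  by (simp add: compact_Int_closed closed_hyperplane Int_commute)

lemma compact_S2: "compact ({x::real^4. inner e1 x = 0} \<inter> {x. inner f x = 0} \<inter> sphere 0 1)"
proof -
  have "closed ({x::real^4. inner e1 x = 0} \<inter> {x. inner f x = 0})"
    by (intro closed_Int closed_hyperplane)
  then show ?thesis by (metis Int_commute compact_Int_closed compact_sphere)
qed

lemma inner_e1: "inner e1 (x::real^4) = x$1"
  by (simp add: inner4 axis4)

lemma norm1_nsq: "norm (x::real^4) = 1 \<longleftrightarrow> nsq x = 1"
proof
  assume "norm x = 1" then show "nsq x = 1" using norm4[of x] by simp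
next
  assume "nsq x = 1"
  then have "(norm x)^2 = 1" using norm4[of x] by simp
  then have "norm x = 1 \<or> norm x = -1" by (simp add: power2_eq_1_iff)
  then show "norm x = 1" using norm_ge_zero[of x] by linarith
qed

lemma svd_core:
  fixes A0 :: "real^4 \<Rightarrow> real^4"
  assumes lin: "linear A0" and inj: "inj A0" and A0e1: "A0 e1 = e1"
  shows "\<exists>u v a1 a2 a3 b1 b2 b3. nsq u = 1 \<and> nsq v = 1 \<and>
    rot v (A0 (rot u e2)) = b1 *\<^sub>R e1 + a1 *\<^sub>R e2 \<and>
    rot v (A0 (rot u e3)) = b2 *\<^sub>R e1 + a2 *\<^sub>R e3 \<and>
    rot v (A0 (rot u e4)) = b3 *\<^sub>R e1 + a3 *\<^sub>R e4 \<and>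
    a1 \<ge> a2 \<and> a2 \<ge> \<bar>a3\<bar> \<and> \<bar>a3\<bar> > 0"
proof -
  define N where "N x = A0 x - (A0 x $ 1) *\<^sub>R e1" for x
  have linN: "linear N" unfolding N_def using lin
    by (intro linearI) (simp_all add: linear_add linear_scale algebra_simps)
  have Npure: "(N x)$1 = 0" for x unfolding N_def by (simp add: axis4)
  have A0split: "A0 x = N x + (A0 x $ 1) *\<^sub>R e1" for x unfolding N_def by simp
  have NN: "x = 0" if "x$1 = 0" "N x = 0" for x
  proof -
    have "A0 x = (A0 x $ 1) *\<^sub>R e1" using A0split[of x] that(2) by simp
    also have "\<dots> = A0 ((A0 x $ 1) *\<^sub>R e1)" using lin A0e1 by (simp add: linear_scale)
    finally have "A0 x = A0 ((A0 x $ 1) *\<^sub>R e1)" .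
    then have xe: "x = (A0 x $ 1) *\<^sub>R e1" using inj by (simp add: inj_eq)
    define c where "c = A0 x $ 1"
    have xc: "x = c *\<^sub>R e1" using xe unfolding c_def .
    then have "x$1 = c" by (simp add: axis4)
    then show ?thesis using xc that(1) by simp
  qed
  define P1 where "P1 = {x::real^4. x$1 = 0}"
  have sP1: "subspace P1" unfolding P1_def by (rule subspace_pure)
  define S1 where "S1 = {x::real^4. inner e1 x = 0} \<inter> sphere 0 1"
  have cS1: "compact S1" unfolding S1_def by (rule compact_S1)
  have memS1: "x \<in> S1 \<longleftrightarrow> x$1 = 0 \<and> nsq x = 1" for x
    unfolding S1_def by (simp add: inner_e1 norm1_nsq)
  have "e2 \<in> S1" unfolding memS1 by (simp add: axis4 nsq_def)
  then obtain f1 where f1: "f1 \<in> S1" and f1max: "\<forall>y\<in>S1. inner (N y) (N y) \<le> inner (N f1) (N f1)"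
    using max_on[OF linN cS1] by blast
  define lam1 where "lam1 = inner (N f1) (N f1)"
  have pf1: "f1$1 = 0" and nf1: "nsq f1 = 1" using f1 memS1 by auto
  have bound1: "inner (N x) (N x) \<le> lam1 * inner x x" if "x \<in> P1" for x
    by (rule bound_scale[OF linN sP1 _ that]) (use f1max memS1 P1_def norm1_nsq lam1_def in auto)
  have L1: "inner (N f1) (N y) = lam1 * inner f1 y" if "y$1 = 0" for y
    by (rule lagrange[OF linN sP1 _ bound1]) (use pf1 nf1 that P1_def lam1_def nsq_inner in auto)
  define P2 where "P2 = {x::real^4. x$1 = 0 \<and> inner f1 x = 0}"
  have sP2: "subspace P2" unfolding P2_def by (rule subspace_pure2)
  define S2 where "S2 = {x::real^4. inner e1 x = 0} \<inter> {x. inner f1 x = 0} \<inter> sphere 0 1"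
  have cS2: "compact S2" unfolding S2_def by (rule compact_S2)
  have memS2: "x \<in> S2 \<longleftrightarrow> x$1 = 0 \<and> inner f1 x = 0 \<and> nsq x = 1" for x
    unfolding S2_def by (auto simp: inner_e1 norm1_nsq)
  obtain u1 where u1: "nsq u1 = 1" "rot u1 e2 = f1" using one_vec[OF pf1 nf1] by blast
  have "rot u1 e3 \<in> S2"
  proof -
    have "(rot u1 e3)$1 = 0" by (rule pure_rot) (simp add: axis4)
    moreover have "inner f1 (rot u1 e3) = 0" using u1 inner_rot[OF u1(1), of e2 e3] by (simp add: inner4 axis4)
    moreover have "nsq (rot u1 e3) = 1" using nsq_rot[OF u1(1)] by (simp add: nsq_def axis4)
    ultimately show ?thesis unfolding memS2 by simp
  qed
  then have "S2 \<noteq> {}" by blast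
  then obtain f2 where f2: "f2 \<in> S2" and f2max: "\<forall>y\<in>S2. inner (N y) (N y) \<le> inner (N f2) (N f2)"
    using max_on[OF linN cS2] by blast
  define lam2 where "lam2 = inner (N f2) (N f2)"
  have pf2: "f2$1 = 0" and o12: "inner f1 f2 = 0" and nf2: "nsq f2 = 1" using f2 memS2 by auto
  have bound2: "inner (N x) (N x) \<le> lam2 * inner x x" if "x \<in> P2" for x
    by (rule bound_scale[OF linN sP2 _ that]) (use f2max memS2 P2_def norm1_nsq lam2_def in auto)
  have L2': "inner (N f2) (N y) = lam2 * inner f2 y" if "y \<in> P2" for y
    by (rule lagrange[OF linN sP2 _ bound2]) (use pf2 nf2 o12 that P2_def lam2_def nsq_inner in auto)
  have N12: "inner (N f1) (N f2) = 0" using L1[OF pf2] o12 by simp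
  have L2: "inner (N f2) (N y) = lam2 * inner f2 y" if "y$1 = 0" for y
  proof -
    define y' where "y' = y - (inner f1 y) *\<^sub>R f1"
    have ff: "inner f1 f1 = 1" using nf1 nsq_inner by simp
    have "y' \<in> P2" unfolding P2_def y'_def using that pf1 ff
      by (simp add: inner_diff_right)
    then have a: "inner (N f2) (N y') = lam2 * inner f2 y'" by (rule L2')
    have "N y = N y' + (inner f1 y) *\<^sub>R N f1" unfolding y'_def using linN
      by (simp add: linear_diff linear_scale)
    then have "inner (N f2) (N y) = inner (N f2) (N y')"
      using N12 by (simp add: inner_add_right inner_commute)
    moreover have "inner f2 y = inner f2 y'" unfolding y'_def using o12
      by (simp add: inner_diff_right inner_commute)
    ultimately show ?thesis using a by simp
  qed
  have l21: "lam2 \<le> lam1" using f1max memS1 pf2 nf2 lam2_def lam1_def by auto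
  obtain u where u: "nsq u = 1" "rot u e2 = f1" "rot u e3 = f2"
    using frame[OF pf1 pf2 nf1 nf2 o12] by blast
  define f3 where "f3 = rot u e4"
  have pf3: "f3$1 = 0" unfolding f3_def by (rule pure_rot) (simp add: axis4)
  have nf3: "nsq f3 = 1" unfolding f3_def using nsq_rot[OF u(1)] by (simp add: nsq_def axis4)
  have o13: "inner f1 f3 = 0" unfolding f3_def using u inner_rot[OF u(1), of e2 e4] by (simp add: inner4 axis4)
  have o23: "inner f2 f3 = 0" unfolding f3_def using u inner_rot[OF u(1), of e3 e4] by (simp add: inner4 axis4)
  define lam3 where "lam3 = inner (N f3) (N f3)"
  have l32: "lam3 \<le> lam2" using f2max memS2 pf3 nf3 o13 lam3_def lam2_def by auto
  have "f3 \<noteq> 0" using nf3 by (auto simp: nsq_def)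
  then have "N f3 \<noteq> 0" using NN pf3 by blast
  then have l3pos: "lam3 > 0" unfolding lam3_def by simp
  have N13: "inner (N f1) (N f3) = 0" using L1[OF pf3] o13 by simp
  have N23: "inner (N f2) (N f3) = 0" using L2[OF pf3] o23 by simp
  have l1pos: "lam1 > 0" and l2pos: "lam2 > 0" using l3pos l32 l21 by linarith+
  define g1 where "g1 = (1 / sqrt lam1) *\<^sub>R N f1"
  define g2 where "g2 = (1 / sqrt lam2) *\<^sub>R N f2"
  have pg1: "g1$1 = 0" and pg2: "g2$1 = 0" unfolding g1_def g2_def by (simp_all add: Npure)
  have ng1: "nsq g1 = 1" unfolding g1_def nsq_inner using l1pos lam1_def
    by (simp add: power2_eq_square[symmetric])
  have ng2: "nsq g2 = 1" unfolding g2_def nsq_inner using l2pos lam2_def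
    by (simp add: power2_eq_square[symmetric])
  have og: "inner g1 g2 = 0" unfolding g1_def g2_def using N12 by simp
  obtain v' where v': "nsq v' = 1" "rot v' e2 = g1" "rot v' e3 = g2"
    using frame[OF pg1 pg2 ng1 ng2 og] by blast
  define v where "v = qcnj v'"
  have nv: "nsq v = 1" unfolding v_def using v' by (simp add: nsq_qcnj)
  have rg1: "rot v g1 = e2" unfolding v_def v'(2)[symmetric] using v'(1) by (rule rot_inv)
  have rg2: "rot v g2 = e3" unfolding v_def v'(3)[symmetric] using v'(1) by (rule rot_inv)
  define y where "y = rot v (N f3)"
  have "rot v' y = N f3" unfolding y_def v_def using v'(1) by (rule rot_inv')
  have y1: "y$1 = 0" unfolding y_def by (rule pure_rot) (rule Npure)
  have "inner e2 y = inner (rot v' e2) (rot v' y)" using inner_rot[OF v'(1)] by simp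
  also have "\<dots> = 0" unfolding v'(2) \<open>rot v' y = N f3\<close> g1_def using N13 by simp
  finally have y2: "y$2 = 0" by (simp add: inner4 axis4)
  have "inner e3 y = inner (rot v' e3) (rot v' y)" using inner_rot[OF v'(1)] by simp
  also have "\<dots> = 0" unfolding v'(3) \<open>rot v' y = N f3\<close> g2_def using N23 by simp
  finally have y3: "y$3 = 0" by (simp add: inner4 axis4)
  have yform: "y = (y$4) *\<^sub>R e4" using y1 y2 y3 by (simp add: vec4_eq axis4)
  have "nsq y = nsq (N f3)" unfolding y_def using nv by (rule nsq_rot)
  then have "(y$4)^2 = lam3" unfolding lam3_def nsq_inner[symmetric] using y1 y2 y3
    by (simp add: nsq_def)
  then have a3abs: "\<bar>y$4\<bar> = sqrt lam3" by (metis real_sqrt_abs)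
  have Nf1: "N f1 = sqrt lam1 *\<^sub>R g1" unfolding g1_def using l1pos by simp
  have Nf2: "N f2 = sqrt lam2 *\<^sub>R g2" unfolding g2_def using l2pos by simp
  have re1: "rot v e1 = e1" using rot_e1[of v] nv by simp
  have rA: "rot v (A0 x) = (A0 x $ 1) *\<^sub>R e1 + rot v (N x)" for x
  proof -
    have "rot v (A0 x) = rot v (N x + (A0 x $ 1) *\<^sub>R e1)" using arg_cong[where f="rot v", OF A0split[of x]] .
    then show ?thesis using re1 by (simp add: rot_add rot_scaleR)
  qed
  have c1: "rot v (A0 (rot u e2)) = (A0 f1 $ 1) *\<^sub>R e1 + sqrt lam1 *\<^sub>R e2"
    unfolding u(2) rA Nf1 rot_scaleR rg1 ..
  have c2: "rot v (A0 (rot u e3)) = (A0 f2 $ 1) *\<^sub>R e1 + sqrt lam2 *\<^sub>R e3"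
    unfolding u(3) rA Nf2 rot_scaleR rg2 ..
  have c3: "rot v (A0 (rot u e4)) = (A0 f3 $ 1) *\<^sub>R e1 + (y$4) *\<^sub>R e4"
    unfolding f3_def[symmetric] rA y_def[symmetric] using yform by simp
  have o1: "sqrt lam1 \<ge> sqrt lam2" using l21 by simp
  have o2: "sqrt lam2 \<ge> \<bar>y$4\<bar>" using l32 a3abs by simp
  have o3: "\<bar>y$4\<bar> > 0" using l3pos a3abs by simp
  show ?thesis using u(1) nv c1 c2 c3 o1 o2 o3 by blast
qed


lemma csmult_nth [simp]: "csmult c A $ i $ j = c * A $ i $ j"
  by (simp add: csmult_def)

lemma csmult_mult: "csmult c A ** B = csmult c (A ** B)" "A ** csmult c B = csmult c (A ** B)"
  by (simp_all add: mat2_eq algebra_simps)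

lemma csmult_csmult [simp]: "csmult a (csmult b A) = csmult (a*b) A"
  by (simp add: mat2_eq)

lemma csmult_add: "csmult c (A + B) = csmult c A + csmult c B" "csmult (a + b) A = csmult a A + csmult b A"
  by (simp_all add: mat2_eq algebra_simps)

lemma csmult_1 [simp]: "csmult 1 A = A"
  by (simp add: mat2_eq)

lemma csmult_0 [simp]: "csmult 0 A = 0" "csmult c 0 = 0"
  by (simp_all add: mat2_eq)

lemma scaleR_csmult: "r *\<^sub>R A = csmult (of_real r) (A::complex^2^2)"
  by (simp only: mat2_eq vector_scaleR_component csmult_nth) (simp add: scaleR_conv_of_real)

lemma csmult_scaleR: "csmult c (r *\<^sub>R A) = csmult (of_real r * c) (A::complex^2^2)"
  by (simp add: scaleR_csmult mult.commute)

lemma cadj_csmult: "cadj (csmult c A) = csmult (cnj c) (cadj A)"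
  by (simp add: mat2_eq)

lemma cadj_mult: "cadj (A ** B) = cadj B ** cadj A"
  by (simp add: mat2_eq algebra_simps)

lemma cadj_cadj [simp]: "cadj (cadj A) = A"
  by (simp add: mat2_eq)

lemma cadj_mat1 [simp]: "cadj (mat 1) = (mat 1 :: complex^2^2)"
  by (simp add: mat2_eq mat_def)

lemma linear_csmult: "linear (csmult c :: complex^2^2 \<Rightarrow> complex^2^2)"
  by (rule linearI) (simp_all add: csmult_add scaleR_csmult mult.commute)

lemma linear_csmult_left: "linear (\<lambda>c. csmult c (A::complex^2^2))"
  by (rule linearI) (simp_all add: csmult_add scaleR_csmult scaleR_conv_of_real ac_simps)

lemma qm_add: "qm (x + y) = qm x + qm y"
  by (simp add: mat2_eq complex_eq_iff)

lemma qm_scaleR: "qm (r *\<^sub>R x) = r *\<^sub>R qm x"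
  by (simp add: mat2_eq complex_eq_iff)

lemma qm_diff: "qm (x - y) = qm x - qm y"
  by (simp add: mat2_eq complex_eq_iff)

lemma qm_0 [simp]: "qm 0 = 0"
  by (simp add: mat2_eq complex_eq_iff)

lemma linear_qm: "linear qm"
  by (rule linearI) (simp_all add: qm_add qm_scaleR)

lemma qm_eq_iff: "qm x = qm y \<longleftrightarrow> x = y"
  by (auto simp: mat2_eq complex_eq_iff vec4_eq)

lemma qm_eq_0: "qm x = 0 \<longleftrightarrow> x = 0"
  using qm_eq_iff[of x 0] by simp

lemma qm_e1: "qm e1 = mat 1"
  using Sig_qm(4) by simp

lemma csmult_real_qm: "csmult (of_real r) (qm x) = qm (r *\<^sub>R x)"
  by (simp add: qm_scaleR scaleR_csmult)

lemma qm_unit: "cadj (qm x) ** qm x = csmult (of_real (nsq x)) (mat 1)"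
  "qm x ** cadj (qm x) = csmult (of_real (nsq x)) (mat 1)"
  by (simp_all add: qm_cadj qm_mult qmul_qcnj qm_scaleR scaleR_csmult qm_e1)

definition rho1 :: "complex^2^2 \<Rightarrow> real^4" where
  "rho1 X = q4 ((Re (X$1$1) + Re (X$2$2))/2) ((Im (X$1$2) + Im (X$2$1))/2)
              ((Re (X$1$2) - Re (X$2$1))/2) ((Im (X$1$1) - Im (X$2$2))/2)"

definition rho2 :: "complex^2^2 \<Rightarrow> real^4" where
  "rho2 X = q4 ((Im (X$1$1) + Im (X$2$2))/2) (-(Re (X$1$2) + Re (X$2$1))/2)
              ((Im (X$1$2) - Im (X$2$1))/2) ((Re (X$2$2) - Re (X$1$1))/2)"

lemma decomp: "X = qm (rho1 X) + csmult \<i> (qm (rho2 X))"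
  by (simp add: mat2_eq complex_eq_iff rho1_def rho2_def field_simps)

lemma rho_qm: "rho1 (qm a + csmult \<i> (qm b)) = a" "rho2 (qm a + csmult \<i> (qm b)) = b"
  by (simp_all add: rho1_def rho2_def vec4_eq field_simps)

lemma rho_qm1: "rho1 (qm a) = a" "rho2 (qm a) = 0" "rho1 (csmult \<i> (qm b)) = 0" "rho2 (csmult \<i> (qm b)) = b"
  using rho_qm[of a 0] rho_qm[of 0 b] by simp_all

lemma linear_rho: "linear rho1" "linear rho2"
  by (rule linearI; simp add: rho1_def rho2_def vec4_eq field_simps)+

lemma csmult_qm_split: "csmult z (qm q) = qm (Re z *\<^sub>R q) + csmult \<i> (qm (Im z *\<^sub>R q))"
  by (simp add: mat2_eq complex_eq_iff algebra_simps)

definition CH :: "(complex^2^2) set" where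
  "CH = {csmult z (qm v) | z v. True}"

lemma CH_I: "csmult z (qm v) \<in> CH"
  unfolding CH_def by blast

lemma zero_CH: "0 \<in> CH"
  using CH_I[of 0 0] by simp

lemma qm_CH: "qm v \<in> CH"
  using CH_I[of 1 v] by simp

lemma scaleR_CH: "X \<in> CH \<Longrightarrow> r *\<^sub>R X \<in> CH"
  unfolding CH_def by (auto simp: scaleR_csmult; blast)

lemma csmult_CH: "X \<in> CH \<Longrightarrow> csmult c X \<in> CH"
  unfolding CH_def by (auto; blast)

lemma mult_CH: "X \<in> CH \<Longrightarrow> Y \<in> CH \<Longrightarrow> X ** Y \<in> CH"
  unfolding CH_def by (auto simp: csmult_mult qm_mult; blast)

lemma cadj_CH: "X \<in> CH \<Longrightarrow> cadj X \<in> CH"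
  unfolding CH_def by (auto simp: cadj_csmult qm_cadj; blast)

lemma mat1_U2C: "mat 1 \<in> U2C"
  by (simp add: U2C_def)

lemma qm_U2C: "nsq u = 1 \<Longrightarrow> qm u \<in> U2C"
  unfolding U2C_def by (simp add: qm_unit)

lemma complex_collapse2: "Complex (Re z) (Im z) = z" "Complex (- Re z) (Im z) = - cnj z"
  "Complex (Re z) (- Im z) = cnj z"
  by (simp_all add: complex_eq_iff)

lemma unitary_struct:
  assumes "U \<in> U2C"
  shows "\<exists>w v. U = csmult w (qm v)"
proof -
  define p where "p = U$1$1"
  define q where "q = U$1$2"
  define r where "r = U$2$1"
  define s where "s = U$2$2"
  have UU: "cadj U ** U = mat 1" using assms unfolding U2C_def by simp
  have h1: "cnj p * p + cnj r * r = 1" using arg_cong[where f="\<lambda>M. M$1$1", OF UU]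
    unfolding p_def r_def by (simp add: mat_def)
  have h2: "cnj p * q + cnj r * s = 0" using arg_cong[where f="\<lambda>M. M$1$2", OF UU]
    unfolding p_def q_def r_def s_def by (simp add: mat_def)
  have h4: "cnj q * q + cnj s * s = 1" using arg_cong[where f="\<lambda>M. M$2$2", OF UU]
    unfolding q_def s_def by (simp add: mat_def)
  define d where "d = p * s - q * r"
  have "det (cadj U ** U) = 1" using UU by simp
  then have "det (cadj U) * det U = 1" by (simp add: det_mul)
  then have dd: "cnj d * d = 1" unfolding d_def p_def q_def r_def s_def by (simp add: det_2 ac_simps)
  have h2': "cnj q * p + cnj s * r = 0" using arg_cong[where f=cnj, OF h2] by (simp add: algebra_simps)
  have sform: "s = d * cnj p"
  proof -
    have "d * cnj p = s * (cnj p * p) - (cnj p * q) * r" unfolding d_def by (simp add: algebra_simps)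
    also have "\<dots> = s * (cnj p * p) + (cnj r * s) * r"
    proof -
      have e: "cnj p * q = - (cnj r * s)" using h2 by (simp add: eq_neg_iff_add_eq_0)
      show ?thesis by (simp add: e)
    qed
    also have "\<dots> = s * (cnj p * p + cnj r * r)" by (simp add: algebra_simps)
    finally show ?thesis using h1 by simp
  qed
  have rform: "r = - d * cnj q"
  proof -
    have "- d * cnj q = r * (cnj q * q) - (cnj q * p) * s" unfolding d_def by (simp add: algebra_simps)
    also have "\<dots> = r * (cnj q * q) + (cnj s * r) * s"
    proof -
      have e: "cnj q * p = - (cnj s * r)" using h2' by (simp add: eq_neg_iff_add_eq_0)
      show ?thesis by (simp add: e)
    qed
    also have "\<dots> = r * (cnj q * q + cnj s * s)" by (simp add: algebra_simps)
    finally show ?thesis using h4 by simp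
  qed
  define w where "w = csqrt d"
  have w2: "w^2 = d" unfolding w_def by simp
  have "complex_of_real ((cmod d)^2) = 1" using dd complex_norm_square[of d] by (simp add: mult.commute)
  then have "(cmod d)^2 = 1" by (metis of_real_eq_1_iff)
  then have "cmod d = 1" by (simp add: power2_eq_1_iff) (use norm_ge_zero[of d] in linarith)
  then have "(cmod w)^2 = 1" using w2 norm_power[of w 2] by simp
  then have ww: "cnj w * w = 1" using complex_norm_square[of w] by (simp add: mult.commute)
  define p' where "p' = p * cnj w"
  define q' where "q' = q * cnj w"
  define v where "v = q4 (Re p') (Im q') (Re q') (Im p')"
  have e11: "csmult w (qm v) $ 1 $ 1 = w * p'" unfolding v_def by (simp add: complex_collapse2)
  have e12: "csmult w (qm v) $ 1 $ 2 = w * q'" unfolding v_def by (simp add: complex_collapse2)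
  have e21: "csmult w (qm v) $ 2 $ 1 = - w * cnj q'" unfolding v_def by (simp add: complex_collapse2)
  have e22: "csmult w (qm v) $ 2 $ 2 = w * cnj p'" unfolding v_def by (simp add: complex_collapse2)
  have "U = csmult w (qm v)"
    unfolding mat2_eq e11 e12 e21 e22
  proof (intro conjI)
    have "w * p' = p * (cnj w * w)" unfolding p'_def by (simp add: algebra_simps)
    then show "U$1$1 = w * p'" using ww p_def by simp
    have "w * q' = q * (cnj w * w)" unfolding q'_def by (simp add: algebra_simps)
    then show "U$1$2 = w * q'" using ww q_def by simp
    have "- w * cnj q' = - ((w^2) * cnj q)" unfolding q'_def by (simp add: power2_eq_square)
    then show "U$2$1 = - w * cnj q'" using w2 rform r_def by simp
    have "w * cnj p' = (w^2) * cnj p" unfolding p'_def by (simp add: power2_eq_square)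
    then show "U$2$2 = w * cnj p'" using w2 sform s_def by simp
  qed
  then show ?thesis by blast
qed

lemma FU2C_CH: "FU2C = CH"
proof
  show "FU2C \<subseteq> CH"
  proof
    fix X assume "X \<in> FU2C"
    then obtain g U where X: "X = csmult g U" and U: "U \<in> U2C" unfolding FU2C_def by auto
    obtain w v where "U = csmult w (qm v)" using unitary_struct[OF U] by blast
    then show "X \<in> CH" using X by (simp add: CH_I)
  qed
  show "CH \<subseteq> FU2C"
  proof
    fix X assume "X \<in> CH"
    then obtain z v where X: "X = csmult z (qm v)" unfolding CH_def by blast
    show "X \<in> FU2C"
    proof (cases "v = 0")
      case True
      then have "X = csmult 0 (mat 1)" using X by simp
      then show ?thesis unfolding FU2C_def using mat1_U2C by blast
    next
      case False
      define u where "u = (1 / norm v) *\<^sub>R v"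
      have "nsq u = 1" unfolding u_def nsq_scale norm4[symmetric] using False
        by (simp add: power_divide)
      then have "qm u \<in> U2C" by (rule qm_U2C)
      moreover have "X = csmult (z * of_real (norm v)) (qm u)"
        unfolding X u_def qm_scaleR csmult_scaleR using False by simp
      ultimately show ?thesis unfolding FU2C_def by blast
    qed
  qed
qed


lemma T_CH:
  assumes lin: "linear T" and h: "T ` U2C \<subseteq> FU2C" and X: "X \<in> CH"
  shows "T X \<in> CH"
proof -
  obtain z v where Xz: "X = csmult z (qm v)" using X unfolding CH_def by blast
  show ?thesis
  proof (cases "z = 0 \<or> v = 0")
    case True
    then have "X = 0" using Xz by auto
    then show ?thesis using lin zero_CH by (simp add: linear_0)
  next
    case False
    then have z0: "z \<noteq> 0" and v0: "v \<noteq> 0" by auto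
    define U where "U = csmult (z / of_real (cmod z)) (qm ((1 / norm v) *\<^sub>R v))"
    have nu: "nsq ((1 / norm v) *\<^sub>R v) = 1" unfolding nsq_scale norm4[symmetric] using v0
      by (simp add: power_divide)
    have zz: "cnj (z / of_real (cmod z)) * (z / of_real (cmod z)) = 1"
    proof -
      have "cnj z * z = of_real ((cmod z)^2)" using complex_norm_square[of z] by (simp add: mult.commute)
      then show ?thesis using z0 by (simp add: field_simps power2_eq_square)
    qed
    have "cadj U ** U = csmult (cnj (z / of_real (cmod z)) * (z / of_real (cmod z)))
        (cadj (qm ((1 / norm v) *\<^sub>R v)) ** qm ((1 / norm v) *\<^sub>R v))"
      unfolding U_def cadj_csmult csmult_mult by (simp add: ac_simps)
    also have "\<dots> = mat 1" unfolding zz qm_unit nu by simp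
    finally have "U \<in> U2C" unfolding U2C_def by simp
    then have TU: "T U \<in> CH" using h FU2C_CH by blast
    have "X = (cmod z * norm v) *\<^sub>R U"
      unfolding Xz U_def qm_scaleR csmult_scaleR scaleR_csmult csmult_csmult using z0 v0
      by (simp add: field_simps)
    then have "T X = (cmod z * norm v) *\<^sub>R T U" using lin by (simp add: linear_scale)
    then show ?thesis using TU scaleR_CH by simp
  qed
qed

lemma qm_split_add: "(qm a + csmult \<i> (qm b)) + (qm c + csmult \<i> (qm d)) = qm (a + c) + csmult \<i> (qm (b + d))"
  by (simp add: mat2_eq complex_eq_iff)

lemma depB:
  assumes D: "Im (cnj z1 * z2) \<noteq> 0"
    and eq: "csmult z1 (qm q1) + csmult z2 (qm q2) = csmult z (qm q)"
  shows "\<exists>\<alpha> \<beta>. q1 = \<alpha> *\<^sub>R q \<and> q2 = \<beta> *\<^sub>R q"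
proof -
  have eq': "qm (Re z1 *\<^sub>R q1 + Re z2 *\<^sub>R q2) + csmult \<i> (qm (Im z1 *\<^sub>R q1 + Im z2 *\<^sub>R q2)) =
      qm (Re z *\<^sub>R q) + csmult \<i> (qm (Im z *\<^sub>R q))"
  proof -
    have s1: "csmult z1 (qm q1) = qm (Re z1 *\<^sub>R q1) + csmult \<i> (qm (Im z1 *\<^sub>R q1))" by (rule csmult_qm_split)
    have s2: "csmult z2 (qm q2) = qm (Re z2 *\<^sub>R q2) + csmult \<i> (qm (Im z2 *\<^sub>R q2))" by (rule csmult_qm_split)
    have s3: "csmult z (qm q) = qm (Re z *\<^sub>R q) + csmult \<i> (qm (Im z *\<^sub>R q))" by (rule csmult_qm_split)
    show ?thesis using eq unfolding s1 s2 s3 qm_split_add .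
  qed
  have E1: "Re z1 *\<^sub>R q1 + Re z2 *\<^sub>R q2 = Re z *\<^sub>R q" using arg_cong[where f=rho1, OF eq'] by (simp add: rho_qm)
  have E2: "Im z1 *\<^sub>R q1 + Im z2 *\<^sub>R q2 = Im z *\<^sub>R q" using arg_cong[where f=rho2, OF eq'] by (simp add: rho_qm)
  define dd where "dd = Re z1 * Im z2 - Im z1 * Re z2"
  have dd0: "dd \<noteq> 0" using D unfolding dd_def by (simp add: algebra_simps)
  have "q1 = ((Im z2 * Re z - Re z2 * Im z) / dd) *\<^sub>R q"
  proof -
    have "\<forall>k. q1$k = ((Im z2 * Re z - Re z2 * Im z) / dd) * q$k"
    proof
      fix k
      have a: "Re z1 * q1$k + Re z2 * q2$k = Re z * q$k" using arg_cong[where f="\<lambda>x. x$k", OF E1] by simp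
      have b: "Im z1 * q1$k + Im z2 * q2$k = Im z * q$k" using arg_cong[where f="\<lambda>x. x$k", OF E2] by simp
      have "dd * q1$k = Im z2 * (Re z1 * q1$k + Re z2 * q2$k) - Re z2 * (Im z1 * q1$k + Im z2 * q2$k)"
        unfolding dd_def by (simp add: algebra_simps)
      also have "\<dots> = (Im z2 * Re z - Re z2 * Im z) * q$k" unfolding a b by (simp add: algebra_simps)
      finally show "q1$k = ((Im z2 * Re z - Re z2 * Im z) / dd) * q$k" using dd0 by (simp add: field_simps)
    qed
    then show ?thesis by (simp add: vec_eq_iff)
  qed
  moreover have "q2 = ((Re z1 * Im z - Im z1 * Re z) / dd) *\<^sub>R q"
  proof -
    have "\<forall>k. q2$k = ((Re z1 * Im z - Im z1 * Re z) / dd) * q$k"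
    proof
      fix k
      have a: "Re z1 * q1$k + Re z2 * q2$k = Re z * q$k" using arg_cong[where f="\<lambda>x. x$k", OF E1] by simp
      have b: "Im z1 * q1$k + Im z2 * q2$k = Im z * q$k" using arg_cong[where f="\<lambda>x. x$k", OF E2] by simp
      have "dd * q2$k = Re z1 * (Im z1 * q1$k + Im z2 * q2$k) - Im z1 * (Re z1 * q1$k + Re z2 * q2$k)"
        unfolding dd_def by (simp add: algebra_simps)
      also have "\<dots> = (Re z1 * Im z - Im z1 * Re z) * q$k" unfolding a b by (simp add: algebra_simps)
      finally show "q2$k = ((Re z1 * Im z - Im z1 * Re z) / dd) * q$k" using dd0 by (simp add: field_simps)
    qed
    then show ?thesis by (simp add: vec_eq_iff)
  qed
  ultimately show ?thesis by blast
qed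

lemma lemC:
  fixes A B :: "real^4 \<Rightarrow> real^4"
  assumes linA: "linear A" and linB: "linear B" and injA: "inj A"
    and dep: "\<And>v. \<exists>\<alpha> \<beta> q. A v = \<alpha> *\<^sub>R q \<and> B v = \<beta> *\<^sub>R q"
  shows "\<exists>c. \<forall>v. B v = c *\<^sub>R A v"
proof -
  have A0: "A v \<noteq> 0" if "v \<noteq> 0" for v
    using that injA linA by (metis linear_0 injD)
  have ex: "\<exists>t. B v = t *\<^sub>R A v" for v
  proof (cases "v = 0")
    case True then show ?thesis using linA linB by (simp add: linear_0)
  next
    case False
    obtain \<alpha> \<beta> q where h: "A v = \<alpha> *\<^sub>R q" "B v = \<beta> *\<^sub>R q" using dep by blast
    have "\<alpha> \<noteq> 0" using h A0[OF False] by auto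
    then have "B v = (\<beta> / \<alpha>) *\<^sub>R A v" using h by simp
    then show ?thesis by blast
  qed
  define v0 :: "real^4" where "v0 = e1"
  have v00: "v0 \<noteq> 0" unfolding v0_def by (simp add: axis4 vec4_eq)
  obtain c where c: "B v0 = c *\<^sub>R A v0" using ex by blast
  have "B v = c *\<^sub>R A v" for v
  proof -
    obtain t where t: "B v = t *\<^sub>R A v" using ex by blast
    obtain s where s: "B (v + v0) = s *\<^sub>R A (v + v0)" using ex by blast
    have "t *\<^sub>R A v + c *\<^sub>R A v0 = s *\<^sub>R A v + s *\<^sub>R A v0"
      using s t c linA linB by (simp add: linear_add scaleR_add_right)
    then have key: "(t - s) *\<^sub>R A v = (s - c) *\<^sub>R A v0" by (simp add: algebra_simps)
    show ?thesis
    proof (cases "t = s")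
      case True
      then have "(s - c) *\<^sub>R A v0 = 0" using key by simp
      then have "s = c" using A0[OF v00] by simp
      then show ?thesis using t True by simp
    next
      case False
      then have "A v = (1 / (t - s)) *\<^sub>R ((t - s) *\<^sub>R A v)" by simp
      also have "\<dots> = ((s - c) / (t - s)) *\<^sub>R A v0" unfolding key by simp
      also have "\<dots> = A (((s - c) / (t - s)) *\<^sub>R v0)" using linA by (simp add: linear_scale)
      finally have "v = ((s - c) / (t - s)) *\<^sub>R v0" using injA by (simp add: inj_eq)
      then show ?thesis using c linA linB by (simp add: linear_scale)
    qed
  qed
  then show ?thesis by blast
qed



lemma matrix_inv_eq:
  fixes A B :: "'a::field^'n^'n"
  assumes "A ** B = mat 1"
  shows "matrix_inv A = B"
proof -
  have BA: "B ** A = mat 1" using assms matrix_left_right_inverse by blast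
  have ex: "\<exists>A'. A ** A' = mat 1 \<and> A' ** A = mat 1" using assms BA by blast
  define C where "C = matrix_inv A"
  have C: "A ** C = mat 1 \<and> C ** A = mat 1" unfolding C_def matrix_inv_def by (rule someI_ex[OF ex])
  have "C = (B ** A) ** C" using BA by simp
  also have "\<dots> = B ** (A ** C)" by (simp add: matrix_mul_assoc)
  also have "\<dots> = B" using C by simp
  finally show ?thesis unfolding C_def .
qed

lemma subspace_union2:
  assumes "subspace A" "subspace B" "subspace S" "S \<subseteq> A \<union> B"
  shows "S \<subseteq> A \<or> S \<subseteq> B"
proof (rule ccontr)
  assume "\<not> (S \<subseteq> A \<or> S \<subseteq> B)"
  then obtain x y where x: "x \<in> S" "x \<notin> A" and y: "y \<in> S" "y \<notin> B" by blast
  then have xB: "x \<in> B" and yA: "y \<in> A" using assms(4) by blast+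
  have "x + y \<in> S" using x y assms(3) by (simp add: subspace_add)
  then have "x + y \<in> A \<or> x + y \<in> B" using assms(4) by blast
  then show False
  proof
    assume "x + y \<in> A"
    then show False using x yA assms(1) subspace_diff[of A "x+y" y] by simp
  next
    assume "x + y \<in> B"
    then show False using y xB assms(2) subspace_diff[of B "x+y" x] by simp
  qed
qed

lemma real_mult_of_Im0:
  assumes z1: "z1 \<noteq> 0" and h: "Im (cnj z1 * z) = 0"
  shows "\<exists>t. z = of_real t * z1"
proof -
  define t where "t = (Re z1 * Re z + Im z1 * Im z) / ((Re z1)^2 + (Im z1)^2)"
  have n: "(Re z1)^2 + (Im z1)^2 \<noteq> 0" using z1 by (simp add: complex_eq_iff)
  have h': "Re z1 * Im z = Im z1 * Re z" using h by (simp add: algebra_simps)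
  have "t * Re z1 = Re z"
  proof -
    have "t * Re z1 * ((Re z1)^2 + (Im z1)^2) = (Re z1 * Re z + Im z1 * Im z) * Re z1"
      unfolding t_def using n by simp
    also have "\<dots> = Re z * ((Re z1)^2 + (Im z1)^2)"
    proof -
      have "(Re z1 * Re z + Im z1 * Im z) * Re z1 - Re z * ((Re z1)^2 + (Im z1)^2)
          = Im z1 * (Re z1 * Im z - Im z1 * Re z)" by (simp add: algebra_simps power2_eq_square)
      then show ?thesis using h' by simp
    qed
    finally show ?thesis using n by (metis mult_right_cancel)
  qed
  moreover have "t * Im z1 = Im z"
  proof -
    have "t * Im z1 * ((Re z1)^2 + (Im z1)^2) = (Re z1 * Re z + Im z1 * Im z) * Im z1"
      unfolding t_def using n by simp
    also have "\<dots> = Im z * ((Re z1)^2 + (Im z1)^2)"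
    proof -
      have "(Re z1 * Re z + Im z1 * Im z) * Im z1 - Im z * ((Re z1)^2 + (Im z1)^2)
          = Re z1 * (Im z1 * Re z - Re z1 * Im z)" by (simp add: algebra_simps power2_eq_square)
      then show ?thesis using h' by simp
    qed
    finally show ?thesis using n by (metis mult_right_cancel)
  qed
  ultimately have "z = of_real t * z1" by (simp add: complex_eq_iff)
  then show ?thesis by blast
qed

lemma csmult_span2: "csmult c X \<in> span {X, csmult \<i> X}"
proof -
  have "csmult c X = Re c *\<^sub>R X + Im c *\<^sub>R csmult \<i> X"
    by (simp add: mat2_eq complex_eq_iff)
  then show ?thesis by (simp add: span_add span_base span_scale)
qed


lemma card2: "card {a, b} \<le> 2"
  by (cases "a = b") simp_all

lemma lemA:
  fixes g :: "real^4 \<Rightarrow> complex^2^2"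
  assumes lin: "linear g" and inj: "inj g" and CHg: "\<And>v. g v \<in> CH"
  shows "\<exists>w A. w \<noteq> 0 \<and> linear A \<and> inj A \<and> (\<forall>v. g v = csmult w (qm (A v)))"
proof -
  have "(e1::real^4) \<noteq> 0" by (simp add: axis4 vec4_eq)
  then have ge: "g e1 \<noteq> 0" using inj lin by (metis linear_0 injD)
  obtain z1 q1 where gz1: "g e1 = csmult z1 (qm q1)" using CHg[of e1] unfolding CH_def by blast
  have z1: "z1 \<noteq> 0" and q1: "q1 \<noteq> 0" using ge gz1 by auto
  define W1 where "W1 = range (\<lambda>u. csmult z1 (qm u))"
  define W2 where "W2 = range (\<lambda>c. csmult c (qm q1))"
  have sW1: "subspace W1" unfolding W1_def
    using linear_subspace_image[OF linear_compose[OF linear_qm linear_csmult] subspace_UNIV]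
    by (simp add: o_def)
  have sW2: "subspace W2" unfolding W2_def
    by (rule linear_subspace_image[OF linear_csmult_left subspace_UNIV])
  have sR: "subspace (range g)" by (rule linear_subspace_image[OF lin subspace_UNIV])
  have memb: "g v \<in> W1 \<union> W2" for v
  proof -
    obtain z q where gz: "g v = csmult z (qm q)" using CHg[of v] unfolding CH_def by blast
    obtain z' q' where gz': "g (e1 + v) = csmult z' (qm q')" using CHg[of "e1 + v"] unfolding CH_def by blast
    have sum: "csmult z1 (qm q1) + csmult z (qm q) = csmult z' (qm q')"
      using gz gz' gz1 lin by (simp add: linear_add)
    show ?thesis
    proof (cases "Im (cnj z1 * z) = 0")
      case True
      obtain t where "z = of_real t * z1" using real_mult_of_Im0[OF z1 True] by blast
      then have "g v = csmult z1 (qm (t *\<^sub>R q))" using gz by (simp add: qm_scaleR csmult_scaleR)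
      then show ?thesis unfolding W1_def by blast
    next
      case False
      obtain \<alpha> \<beta> where ab: "q1 = \<alpha> *\<^sub>R q'" "q = \<beta> *\<^sub>R q'" using depB[OF False sum] by blast
      have "\<alpha> \<noteq> 0" using ab q1 by auto
      then have "q = (\<beta> / \<alpha>) *\<^sub>R q1" using ab by simp
      then have "g v = csmult (of_real (\<beta> / \<alpha>) * z) (qm q1)" using gz by (simp add: qm_scaleR csmult_scaleR)
      then show ?thesis unfolding W2_def by blast
    qed
  qed
  have "range g \<subseteq> W1 \<or> range g \<subseteq> W2"
    by (rule subspace_union2[OF sW1 sW2 sR]) (use memb in blast)
  moreover have "\<not> range g \<subseteq> W2"
  proof
    assume "range g \<subseteq> W2"
    moreover have "W2 \<subseteq> span {qm q1, csmult \<i> (qm q1)}" unfolding W2_def using csmult_span2 by blast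
    ultimately have sub: "range g \<subseteq> span {qm q1, csmult \<i> (qm q1)}" by (rule subset_trans)
    have fin: "finite {qm q1, csmult \<i> (qm q1)}" by simp
    have "dim (range g) \<le> card {qm q1, csmult \<i> (qm q1)}" by (rule dim_le_card[OF sub fin])
    also have "\<dots> \<le> 2" by (rule card2)
    finally have "dim (range g) \<le> 2" .
    moreover have "inj_on g (span UNIV)" unfolding span_UNIV by (rule inj)
    then have "dim (range g) = dim (UNIV :: (real^4) set)"
      by (rule dim_image_eq[OF lin])
    ultimately show False by simp
  qed
  ultimately have R1: "range g \<subseteq> W1" by blast
  define A where "A v = rho1 (csmult (1/z1) (g v))" for v
  have gA: "g v = csmult z1 (qm (A v))" for v
  proof -
    obtain u where u: "g v = csmult z1 (qm u)" using R1 unfolding W1_def by blast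
    then have "csmult (1/z1) (g v) = qm u" using z1 by simp
    then have "A v = u" unfolding A_def by (simp add: rho_qm1)
    then show ?thesis using u by simp
  qed
  have linA: "linear A"
  proof -
    have "A = rho1 \<circ> (csmult (1/z1) \<circ> g)" unfolding A_def by (simp add: o_def fun_eq_iff)
    then show ?thesis using linear_compose[OF linear_compose[OF lin linear_csmult] linear_rho(1)] by simp
  qed
  have "inj A"
  proof (rule injI)
    fix x y assume "A x = A y"
    then have "g x = g y" using gA by metis
    then show "x = y" using inj by (simp add: inj_eq)
  qed
  then show ?thesis using z1 linA gA by blast
qed


lemma qmul_add: "qmul x (y + z) = qmul x y + qmul x z"
  by (simp add: qmul_def vec4_eq algebra_simps)

lemma conj_qm: "qm u ** qm x ** cadj (qm u) = qm (rot u x)"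
  by (simp add: qm_cadj qm_mult rot_def)

lemma conj_qm_cs: "qm u ** csmult c (qm x) ** cadj (qm u) = csmult c (qm (rot u x))"
  by (simp add: csmult_mult conj_qm)

lemma csmult_qm_combine: "csmult w (qm a) + csmult w (qm b) = csmult w (qm (a + b))"
  by (simp add: qm_add csmult_add)

lemma Im_mu:
  assumes "Im (cnj w * w') \<noteq> 0" "c \<noteq> 0"
  shows "of_real c * w' / w \<notin> \<real>"
proof -
  have w: "w \<noteq> 0" using assms(1) by auto
  have "Im (of_real c * w' / w) = c * Im (cnj w * w') / ((Re w)^2 + (Im w)^2)"
    by (simp add: Im_divide power2_eq_square algebra_simps)
  moreover have "(Re w)^2 + (Im w)^2 \<noteq> 0" using w by (simp add: complex_eq_iff)
  ultimately have "Im (of_real c * w' / w) \<noteq> 0" using assms by simp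
  then show ?thesis by (simp add: complex_is_Real_iff)
qed

lemma complex_forward:
  fixes T :: "complex^2^2 \<Rightarrow> complex^2^2"
  assumes lin: "linear T" and bij: "bij T" and h: "T ` U2C \<subseteq> FU2C"
  shows "(\<exists>\<gamma> W. \<gamma> \<noteq> 0 \<and> W \<in> U2C \<and> T (mat 1) = csmult \<gamma> W) \<and>
        (let L = (\<lambda>X. matrix_inv (T (mat 1)) ** T X) in \<exists>U V \<mu> a b. caseII L U V \<mu> a b)"
proof -
  have inj: "inj T" and surj: "surj T" using bij by (auto simp: bij_def)
  have hCH: "T X \<in> CH" if "X \<in> CH" for X using T_CH[OF lin h that] .
  define g1 where "g1 v = T (qm v)" for v
  define g2 where "g2 v = T (csmult \<i> (qm v))" for v
  have lg1: "linear g1" unfolding g1_def using linear_compose[OF linear_qm lin] by (simp add: o_def)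
  have lg2: "linear g2" unfolding g2_def
    using linear_compose[OF linear_compose[OF linear_qm linear_csmult] lin] by (simp add: o_def)
  have ig1: "inj g1" unfolding g1_def by (rule injI) (simp add: inj_eq[OF inj] qm_eq_iff)
  have ig2: "inj g2" unfolding g2_def
  proof (rule injI)
    fix x y assume "T (csmult \<i> (qm x)) = T (csmult \<i> (qm y))"
    then have "csmult \<i> (qm x) = csmult \<i> (qm y)" by (simp add: inj_eq[OF inj])
    then have "csmult (- \<i>) (csmult \<i> (qm x)) = csmult (- \<i>) (csmult \<i> (qm y))" by simp
    then show "x = y" by (simp add: qm_eq_iff)
  qed
  have cg1: "g1 v \<in> CH" for v unfolding g1_def by (rule hCH[OF qm_CH])
  have cg2: "g2 v \<in> CH" for v unfolding g2_def by (rule hCH[OF csmult_CH[OF qm_CH]])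
  obtain w A where w: "w \<noteq> 0" and linA: "linear A" and injA: "inj A" and TA: "\<forall>v. T (qm v) = csmult w (qm (A v))"
    using lemA[OF lg1 ig1 cg1] unfolding g1_def by blast
  obtain w' B where w': "w' \<noteq> 0" and linB: "linear B" and injB: "inj B" and TB: "\<forall>v. T (csmult \<i> (qm v)) = csmult w' (qm (B v))"
    using lemA[OF lg2 ig2 cg2] unfolding g2_def by blast
  have Tform: "T X = csmult w (qm (A (rho1 X))) + csmult w' (qm (B (rho2 X)))" for X
  proof -
    have "T X = T (qm (rho1 X) + csmult \<i> (qm (rho2 X)))" using decomp[of X] by simp
    also have "\<dots> = T (qm (rho1 X)) + T (csmult \<i> (qm (rho2 X)))" using lin by (simp add: linear_add)
    finally show ?thesis using TA TB by simp
  qed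
  have indep: "Im (cnj w * w') \<noteq> 0"
  proof
    assume "Im (cnj w * w') = 0"
    then obtain t where t: "w' = of_real t * w" using real_mult_of_Im0[OF w] by blast
    obtain X where X: "T X = csmult (\<i> * w) (qm e1)" using surj by (metis surjD)
    have "T X = csmult w (qm (A (rho1 X) + t *\<^sub>R B (rho2 X)))"
      unfolding Tform t by (simp add: csmult_scaleR[symmetric] qm_scaleR[symmetric] csmult_qm_combine)
    then have "csmult (1/w) (csmult w (qm (A (rho1 X) + t *\<^sub>R B (rho2 X)))) = csmult (1/w) (csmult (\<i> * w) (qm e1))"
      using X by simp
    then have "qm (A (rho1 X) + t *\<^sub>R B (rho2 X)) = csmult \<i> (qm e1)" using w by simp
    then have "rho2 (qm (A (rho1 X) + t *\<^sub>R B (rho2 X))) = rho2 (csmult \<i> (qm e1))" by simp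
    then have "(0::real^4) = e1" by (simp add: rho_qm1)
    then show False by (simp add: axis4 vec4_eq)
  qed
  have dep: "\<exists>\<alpha> \<beta> q. A v = \<alpha> *\<^sub>R q \<and> B v = \<beta> *\<^sub>R q" for v
  proof -
    have "qm v + csmult \<i> (qm v) = csmult (1 + \<i>) (qm v)" by (simp add: csmult_add)
    then have "qm v + csmult \<i> (qm v) \<in> CH" by (simp add: CH_I)
    then have "T (qm v + csmult \<i> (qm v)) \<in> CH" by (rule hCH)
    then obtain z q where zq: "T (qm v + csmult \<i> (qm v)) = csmult z (qm q)" unfolding CH_def by blast
    have "T (qm v + csmult \<i> (qm v)) = csmult w (qm (A v)) + csmult w' (qm (B v))"
      using lin TA TB by (simp add: linear_add)
    then have "csmult w (qm (A v)) + csmult w' (qm (B v)) = csmult z (qm q)" using zq by simp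
    from depB[OF indep this] show ?thesis by blast
  qed
  obtain c where c: "\<forall>v. B v = c *\<^sub>R A v" using lemC[OF linA linB injA dep] by blast
  have e10: "(e1::real^4) \<noteq> 0" by (simp add: axis4 vec4_eq)
  have "B e1 \<noteq> 0" using injB linB e10 by (metis linear_0 injD)
  then have c0: "c \<noteq> 0" using c by auto
  define a0 where "a0 = A e1"
  have a00: "a0 \<noteq> 0" unfolding a0_def using injA linA e10 by (metis linear_0 injD)
  have na0: "nsq a0 > 0" using a00 nsq_eq_0[of a0] nsq_nonneg[of a0] by linarith
  have TI: "T (mat 1) = csmult w (qm a0)" unfolding a0_def using TA qm_e1 by metis
  define \<gamma> where "\<gamma> = w * of_real (norm a0)"
  define W where "W = qm ((1 / norm a0) *\<^sub>R a0)"
  have g0: "\<gamma> \<noteq> 0" unfolding \<gamma>_def using w a00 by simp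
  have "nsq ((1 / norm a0) *\<^sub>R a0) = 1" unfolding nsq_scale norm4[symmetric] using a00
    by (simp add: power_divide)
  then have WU: "W \<in> U2C" unfolding W_def by (rule qm_U2C)
  have TIW: "T (mat 1) = csmult \<gamma> W" unfolding TI \<gamma>_def W_def qm_scaleR csmult_scaleR using a00
    by (simp add: field_simps)
  have Minv: "matrix_inv (T (mat 1)) = csmult (1 / (w * of_real (nsq a0))) (qm (qcnj a0))"
  proof (rule matrix_inv_eq)
    have "T (mat 1) ** csmult (1 / (w * of_real (nsq a0))) (qm (qcnj a0))
        = csmult (w * (1 / (w * of_real (nsq a0)))) (qm a0 ** qm (qcnj a0))"
      unfolding TI by (simp add: csmult_mult)
    also have "\<dots> = csmult (w * (1 / (w * of_real (nsq a0))) * of_real (nsq a0)) (mat 1)"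
      by (simp add: qm_mult qmul_qcnj qm_scaleR scaleR_csmult qm_e1)
    also have "\<dots> = mat 1" using w na0 by simp
    finally show "T (mat 1) ** csmult (1 / (w * of_real (nsq a0))) (qm (qcnj a0)) = mat 1" .
  qed
  define A0 where "A0 x = (1 / nsq a0) *\<^sub>R qmul (qcnj a0) (A x)" for x
  have linA0: "linear A0" unfolding A0_def
    by (rule linearI) (simp_all add: linear_add[OF linA] linear_scale[OF linA] qmul_add qmul_scaleR scaleR_add_right)
  have injA0: "inj A0"
  proof (rule injI)
    fix x y assume "A0 x = A0 y"
    then have "qmul (qcnj a0) (A x) = qmul (qcnj a0) (A y)" unfolding A0_def using na0 by simp
    then have "qmul a0 (qmul (qcnj a0) (A x)) = qmul a0 (qmul (qcnj a0) (A y))" by simp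
    then have "A x = A y" using na0 by (simp add: qmul_assoc[symmetric] qmul_qcnj qmul_scaleR)
    then show "x = y" using injA by (simp add: inj_eq)
  qed
  have A0e1: "A0 e1 = e1" unfolding A0_def a0_def[symmetric] using na0 by (simp add: qmul_qcnj)
  define \<mu> where "\<mu> = of_real c * w' / w"
  define L where "L X = matrix_inv (T (mat 1)) ** T X" for X
  have L1: "L (qm x) = qm (A0 x)" for x
  proof -
    have "L (qm x) = csmult (1 / (w * of_real (nsq a0)) * w) (qm (qmul (qcnj a0) (A x)))"
      unfolding L_def Minv using TA by (simp add: csmult_mult qm_mult)
    also have "\<dots> = qm (A0 x)" unfolding A0_def qm_scaleR scaleR_csmult using w by simp
    finally show ?thesis .
  qed
  have L2: "L (csmult \<i> (qm x)) = csmult \<mu> (qm (A0 x))" for x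
  proof -
    have "T (csmult \<i> (qm x)) = csmult (of_real c * w') (qm (A x))"
      using TB c by (simp add: qm_scaleR csmult_scaleR)
    then have "L (csmult \<i> (qm x)) = csmult (1 / (w * of_real (nsq a0)) * (of_real c * w')) (qm (qmul (qcnj a0) (A x)))"
      unfolding L_def Minv by (simp add: csmult_mult qm_mult)
    also have "\<dots> = csmult \<mu> (qm (A0 x))" unfolding A0_def qm_scaleR scaleR_csmult \<mu>_def using w
      by (simp add: field_simps)
    finally show ?thesis .
  qed
  obtain u v a1 a2 a3 b1 b2 b3 where nu: "nsq u = 1" and nv: "nsq v = 1"
    and k1: "rot v (A0 (rot u e2)) = b1 *\<^sub>R e1 + a1 *\<^sub>R e2"
    and k2: "rot v (A0 (rot u e3)) = b2 *\<^sub>R e1 + a2 *\<^sub>R e3"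
    and k3: "rot v (A0 (rot u e4)) = b3 *\<^sub>R e1 + a3 *\<^sub>R e4"
    and o: "a1 \<ge> a2" "a2 \<ge> \<bar>a3\<bar>" "\<bar>a3\<bar> > 0"
    using svd_core[OF linA0 injA0 A0e1] by blast
  define L' where "L' X = qm v ** L (qm u ** X ** cadj (qm u)) ** cadj (qm v)" for X
  have Lq: "L' (qm x) = qm (rot v (A0 (rot u x)))" for x
    unfolding L'_def conj_qm L1 ..
  have Lqi: "L' (csmult \<i> (qm x)) = csmult \<mu> (qm (rot v (A0 (rot u x))))" for x
    unfolding L'_def conj_qm_cs L2 ..
  define a where "a j = (if j = (1::nat) then a1 else if j = 2 then a2 else a3)" for j
  define b where "b j = (if j = (1::nat) then b1 else if j = 2 then b2 else b3)" for j
  have mu: "\<mu> \<notin> \<real>" unfolding \<mu>_def by (rule Im_mu[OF indep c0])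
  have ruve1: "rot v (A0 (rot u e1)) = e1" using rot_e1[of u] rot_e1[of v] nu nv A0e1 by simp
  have cI: "L' (csmult \<i> (mat 1)) = csmult \<mu> (mat 1)"
    unfolding qm_e1[symmetric] Lqi ruve1 ..
  have cS: "L' (Sig j) = a j *\<^sub>R Sig j + b j *\<^sub>R mat 1 \<and> L' (csmult \<i> (Sig j)) = csmult \<mu> (L' (Sig j))"
    if "j \<in> {1,2,3}" for j
  proof -
    have "j = 1 \<or> j = 2 \<or> j = 3" using that by auto
    then show ?thesis
    proof (elim disjE)
      assume j: "j = 1"
      show ?thesis unfolding j Sig_qm(1) Lq Lqi k1 a_def b_def
        by (simp add: qm_add qm_scaleR qm_e1)
    next
      assume j: "j = 2"
      show ?thesis unfolding j Sig_qm(2) Lq Lqi k2 a_def b_def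
        by (simp add: qm_add qm_scaleR qm_e1)
    next
      assume j: "j = 3"
      show ?thesis unfolding j Sig_qm(3) Lq Lqi k3 a_def b_def
        by (simp add: qm_add qm_scaleR qm_e1)
    qed
  qed
  have "caseII L (qm u) (qm v) \<mu> a b"
    unfolding caseII_def Let_def L'_def[symmetric]
    using qm_U2C[OF nu] qm_U2C[OF nv] mu cI cS o unfolding a_def b_def by simp
  then have "let L = (\<lambda>X. matrix_inv (T (mat 1)) ** T X) in \<exists>U V \<mu> a b. caseII L U V \<mu> a b"
    unfolding Let_def L_def[symmetric] by blast
  then show ?thesis using g0 WU TIW by blast
qed


lemma U2C_right: "W \<in> U2C \<Longrightarrow> W ** cadj W = mat 1"
  unfolding U2C_def using matrix_left_right_inverse by blast

lemma U2C_CH: "W \<in> U2C \<Longrightarrow> W \<in> CH"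
proof -
  assume "W \<in> U2C"
  then have "csmult 1 W \<in> FU2C" unfolding FU2C_def by blast
  then show ?thesis using FU2C_CH by simp
qed

lemma Minv_U2C:
  assumes "\<gamma> \<noteq> 0" "W \<in> U2C"
  shows "matrix_inv (csmult \<gamma> W) = csmult (1/\<gamma>) (cadj W)"
  by (rule matrix_inv_eq) (use assms U2C_right[OF assms(2)] in \<open>simp add: csmult_mult\<close>)

lemma linear_lmult: "linear (\<lambda>X::complex^2^2. (M::complex^2^2) ** X)"
  by (rule linearI) (simp_all add: matrix_add_ldistrib scaleR_csmult csmult_mult)

lemma linear_rmult: "linear (\<lambda>X::complex^2^2. X ** (M::complex^2^2))"
  by (rule linearI) (simp_all add: mat2_eq algebra_simps scaleR_csmult csmult_mult)

lemma qm_expand: "x = x$1 *\<^sub>R e1 + x$2 *\<^sub>R e2 + x$3 *\<^sub>R e3 + x$4 *\<^sub>R e4"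
  by (simp add: vec4_eq axis4)

lemma complex_backward:
  fixes T :: "complex^2^2 \<Rightarrow> complex^2^2"
  assumes lin: "linear T" and g: "\<gamma> \<noteq> 0" and W: "W \<in> U2C" and TI: "T (mat 1) = csmult \<gamma> W"
    and cII: "caseII (\<lambda>X. matrix_inv (T (mat 1)) ** T X) U V \<mu> a b"
  shows "T ` U2C \<subseteq> FU2C"
proof -
  define L where "L X = matrix_inv (T (mat 1)) ** T X" for X
  define L' where "L' X = V ** L (U ** X ** cadj U) ** cadj V" for X
  have U: "U \<in> U2C" and V: "V \<in> U2C" and LI: "L' (csmult \<i> (mat 1)) = csmult \<mu> (mat 1)"
    and LS: "\<forall>j\<in>{1,2,3}. L' (Sig j) = a j *\<^sub>R Sig j + b j *\<^sub>R mat 1 \<and>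
                       L' (csmult \<i> (Sig j)) = csmult \<mu> (L' (Sig j))"
    using cII unfolding caseII_def Let_def L'_def[symmetric] L_def[symmetric] by auto
  have Minv: "matrix_inv (T (mat 1)) = csmult (1/\<gamma>) (cadj W)" unfolding TI by (rule Minv_U2C[OF g W])
  have linL: "linear L" unfolding L_def using linear_compose[OF lin linear_lmult] by (simp add: o_def)
  have linL': "linear L'"
  proof -
    have "L' = (\<lambda>X. X ** cadj V) \<circ> ((\<lambda>X. V ** X) \<circ> (L \<circ> ((\<lambda>X. X ** cadj U) \<circ> (\<lambda>X. U ** X))))"
      by (simp add: fun_eq_iff L'_def o_def)
    then show ?thesis
      using linear_compose[OF linear_compose[OF linear_compose[OF linear_compose[OF linear_lmult linear_rmult] linL] linear_lmult] linear_rmult]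
      by simp
  qed
  have L1: "L (mat 1) = mat 1" unfolding L_def TI Minv_U2C[OF g W] using g W unfolding U2C_def
    by (simp add: csmult_mult)
  have UU: "U ** cadj U = mat 1" using U2C_right[OF U] .
  have VV: "V ** cadj V = mat 1" using U2C_right[OF V] .
  have L'1: "L' (mat 1) = mat 1" unfolding L'_def using UU VV L1 by simp
  define Q where "Q = range qm"
  have sQ: "subspace Q" unfolding Q_def by (rule linear_subspace_image[OF linear_qm subspace_UNIV])
  have LSj: "L' (qm (axis k 1)) = qm (b j *\<^sub>R e1 + a j *\<^sub>R axis k 1) \<and>
      L' (csmult \<i> (qm (axis k 1))) = csmult \<mu> (L' (qm (axis k 1)))"
    if "j \<in> {1,2,3}" "Sig j = qm (axis k 1)" for j k
  proof -
    have h: "L' (Sig j) = a j *\<^sub>R Sig j + b j *\<^sub>R mat 1" "L' (csmult \<i> (Sig j)) = csmult \<mu> (L' (Sig j))"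
      using LS that(1) by blast+
    show ?thesis using h unfolding that(2) by (simp add: qm_add qm_scaleR qm_e1)
  qed
  have basis: "L' (qm (axis k 1)) \<in> Q \<and> L' (csmult \<i> (qm (axis k 1))) = csmult \<mu> (L' (qm (axis k 1)))" for k :: 4
  proof -
    have "k = 1 \<or> k = 2 \<or> k = 3 \<or> k = 4" using exhaust_4 by blast
    then show ?thesis
    proof (elim disjE)
      assume k: "k = 1"
      have "L' (qm (axis k 1)) = qm e1" unfolding k qm_e1 L'1 ..
      moreover have "L' (csmult \<i> (qm (axis k 1))) = csmult \<mu> (L' (qm (axis k 1)))"
        unfolding k qm_e1 L'1 LI ..
      ultimately show ?thesis unfolding Q_def by simp
    next
      assume k: "k = 2"
      show ?thesis using LSj[of 1 k] Sig_qm(1) unfolding k Q_def by simp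
    next
      assume k: "k = 3"
      show ?thesis using LSj[of 2 k] Sig_qm(2) unfolding k Q_def by simp
    next
      assume k: "k = 4"
      show ?thesis using LSj[of 3 k] Sig_qm(3) unfolding k Q_def by simp
    qed
  qed
  have genq: "L' (qm x) \<in> Q \<and> L' (csmult \<i> (qm x)) = csmult \<mu> (L' (qm x))" for x
  proof -
    have ex: "qm x = x$1 *\<^sub>R qm e1 + x$2 *\<^sub>R qm e2 + x$3 *\<^sub>R qm e3 + x$4 *\<^sub>R qm e4"
      by (subst qm_expand) (simp add: qm_add qm_scaleR)
    have exi: "csmult \<i> (qm x) = x$1 *\<^sub>R csmult \<i> (qm e1) + x$2 *\<^sub>R csmult \<i> (qm e2)
        + x$3 *\<^sub>R csmult \<i> (qm e3) + x$4 *\<^sub>R csmult \<i> (qm e4)"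
      unfolding ex by (simp add: csmult_add csmult_scaleR scaleR_csmult mult.commute)
    have Lx: "L' (qm x) = x$1 *\<^sub>R L' (qm e1) + x$2 *\<^sub>R L' (qm e2) + x$3 *\<^sub>R L' (qm e3) + x$4 *\<^sub>R L' (qm e4)"
      unfolding ex using linL' by (simp add: linear_add linear_scale)
    have Lxi: "L' (csmult \<i> (qm x)) = x$1 *\<^sub>R L' (csmult \<i> (qm e1)) + x$2 *\<^sub>R L' (csmult \<i> (qm e2))
        + x$3 *\<^sub>R L' (csmult \<i> (qm e3)) + x$4 *\<^sub>R L' (csmult \<i> (qm e4))"
      unfolding exi using linL' by (simp add: linear_add linear_scale)
    have "L' (qm x) \<in> Q" unfolding Lx using basis sQ
      by (intro subspace_add subspace_scale) auto
    moreover have "L' (csmult \<i> (qm x)) = csmult \<mu> (L' (qm x))"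
      unfolding Lxi Lx using basis by (simp add: csmult_add csmult_scaleR scaleR_csmult mult.commute)
    ultimately show ?thesis by blast
  qed
  have L'CH: "L' Y \<in> CH" if yCH: "Y \<in> CH" for Y
  proof -
    obtain z q where Y: "Y = csmult z (qm q)" using yCH unfolding CH_def by blast
    have "Y = qm (Re z *\<^sub>R q) + csmult \<i> (qm (Im z *\<^sub>R q))" unfolding Y by (rule csmult_qm_split)
    moreover have "csmult \<i> (qm (Im z *\<^sub>R q)) = Im z *\<^sub>R csmult \<i> (qm q)"
      by (simp add: mat2_eq complex_eq_iff)
    ultimately have "Y = Re z *\<^sub>R qm q + Im z *\<^sub>R csmult \<i> (qm q)" by (simp add: qm_scaleR)
    then have "L' Y = Re z *\<^sub>R L' (qm q) + Im z *\<^sub>R L' (csmult \<i> (qm q))"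
      using linL' by (simp only: linear_add linear_scale)
    also have "\<dots> = csmult (of_real (Re z) + of_real (Im z) * \<mu>) (L' (qm q))"
      using genq[of q] by (simp add: csmult_add scaleR_csmult)
    finally have e: "L' Y = csmult (of_real (Re z) + of_real (Im z) * \<mu>) (L' (qm q))" .
    obtain k where "L' (qm q) = qm k" using genq[of q] unfolding Q_def by blast
    then show ?thesis unfolding e by (simp add: CH_I)
  qed
  show ?thesis
  proof
    fix Y assume "Y \<in> T ` U2C"
    then obtain X where X: "X \<in> U2C" "Y = T X" by blast
    have "cadj U ** X ** U \<in> CH" using U2C_CH[OF X(1)] U2C_CH[OF U] by (intro mult_CH cadj_CH)
    then have LY: "L' (cadj U ** X ** U) \<in> CH" by (rule L'CH)
    have "U ** (cadj U ** X ** U) ** cadj U = (U ** cadj U) ** X ** (U ** cadj U)"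
      by (simp add: matrix_mul_assoc)
    then have "U ** (cadj U ** X ** U) ** cadj U = X" using UU by simp
    then have "L' (cadj U ** X ** U) = V ** L X ** cadj V"
      unfolding L'_def by simp
    then have "cadj V ** L' (cadj U ** X ** U) ** V = (cadj V ** V) ** L X ** (cadj V ** V)"
      by (simp add: matrix_mul_assoc)
    also have "\<dots> = L X" using V unfolding U2C_def by simp
    finally have "cadj V ** L' (cadj U ** X ** U) ** V = L X" .
    then have LX: "L X \<in> CH" using LY U2C_CH[OF V] by (metis cadj_CH mult_CH)
    have "T X = T (mat 1) ** L X" unfolding L_def TI Minv_U2C[OF g W] using g U2C_right[OF W]
      by (simp add: csmult_mult matrix_mul_assoc)
    then have "T X \<in> CH" using LX TI U2C_CH[OF W] by (metis csmult_CH mult_CH)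
    then show "Y \<in> FU2C" using X FU2C_CH by simp
  qed
qed


lemma complex_part:
  fixes T :: "complex^2^2 \<Rightarrow> complex^2^2"
  assumes lin: "linear T" and bij: "bij T"
  shows "T ` U2C \<subseteq> FU2C \<longleftrightarrow>
        (\<exists>\<gamma> W. \<gamma> \<noteq> 0 \<and> W \<in> U2C \<and> T (mat 1) = csmult \<gamma> W) \<and>
        (let L = (\<lambda>X. matrix_inv (T (mat 1)) ** T X) in
           \<exists>U V \<mu> a b. caseII L U V \<mu> a b)"
proof
  assume "T ` U2C \<subseteq> FU2C"
  then show "(\<exists>\<gamma> W. \<gamma> \<noteq> 0 \<and> W \<in> U2C \<and> T (mat 1) = csmult \<gamma> W) \<and>
        (let L = (\<lambda>X. matrix_inv (T (mat 1)) ** T X) in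
           \<exists>U V \<mu> a b. caseII L U V \<mu> a b)" by (rule complex_forward[OF lin bij])
next
  assume "(\<exists>\<gamma> W. \<gamma> \<noteq> 0 \<and> W \<in> U2C \<and> T (mat 1) = csmult \<gamma> W) \<and>
        (let L = (\<lambda>X. matrix_inv (T (mat 1)) ** T X) in
           \<exists>U V \<mu> a b. caseII L U V \<mu> a b)"
  then obtain \<gamma> W U V \<mu> a b where g: "\<gamma> \<noteq> 0" and W: "W \<in> U2C" and TI: "T (mat 1) = csmult \<gamma> W"
    and c: "caseII (\<lambda>X. matrix_inv (T (mat 1)) ** T X) U V \<mu> a b" unfolding Let_def by blast
  show "T ` U2C \<subseteq> FU2C" by (rule complex_backward[OF lin g W TI c])
qed

lemma complex_mu:
  fixes T :: "complex^2^2 \<Rightarrow> complex^2^2"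
  assumes lin: "linear T" and bij: "bij T" and cl: "complex_linear T" and h: "T ` U2C \<subseteq> FU2C"
    and cII: "caseII (\<lambda>X. matrix_inv (T (mat 1)) ** T X) U V \<mu> a b"
  shows "\<mu> = \<i>"
proof -
  obtain \<gamma> W where g: "\<gamma> \<noteq> 0" and W: "W \<in> U2C" and TI: "T (mat 1) = csmult \<gamma> W"
    using complex_forward[OF lin bij h] by blast
  define L where "L X = matrix_inv (T (mat 1)) ** T X" for X
  have U: "U \<in> U2C" and V: "V \<in> U2C"
    and LI: "V ** L (U ** csmult \<i> (mat 1) ** cadj U) ** cadj V = csmult \<mu> (mat 1)"
    using cII unfolding caseII_def Let_def L_def[symmetric] by auto
  have L1: "L (mat 1) = mat 1" unfolding L_def TI Minv_U2C[OF g W] using g W unfolding U2C_def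
    by (simp add: csmult_mult)
  have Lc: "L (csmult c X) = csmult c (L X)" for c X
    using cl unfolding complex_linear_def L_def by (simp add: csmult_mult)
  have "U ** csmult \<i> (mat 1) ** cadj U = csmult \<i> (U ** cadj U)" by (simp add: csmult_mult)
  also have "\<dots> = csmult \<i> (mat 1)" using U2C_right[OF U] by simp
  finally have "V ** L (U ** csmult \<i> (mat 1) ** cadj U) ** cadj V = csmult \<i> (V ** cadj V)"
    using Lc L1 by (simp add: csmult_mult)
  also have "\<dots> = csmult \<i> (mat 1)" using U2C_right[OF V] by simp
  finally have "csmult \<mu> (mat 1) = csmult \<i> (mat 1 :: complex^2^2)" using LI by simp
  then have "csmult \<mu> (mat 1) $ 1 $ 1 = csmult \<i> (mat 1 :: complex^2^2) $ 1 $ 1" by simp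
  then show ?thesis by (simp add: mat_def)
qed


lemma mmult2r: "((A::real^2^2) ** B) $ i $ j = A$i$1 * B$1$j + A$i$2 * B$2$j"
  by (simp add: matrix_matrix_mult_def sum_2)

lemma Eunit_nth [simp]: "Eunit i j $ a $ b = (if a = i \<and> b = j then 1 else 0)"
  by (simp add: Eunit_def)

lemma V1_char: "V1 = {X. X$1$1 = X$2$2 \<and> X$1$2 = - X$2$1}"
proof -
  have "V1 = {x. \<exists>k. \<exists>ka. x - k *\<^sub>R mat 1 = ka *\<^sub>R (Eunit 1 2 - Eunit 2 1)}"
    unfolding V1_def span_insert span_singleton by auto
  also have "\<dots> = {X. X$1$1 = X$2$2 \<and> X$1$2 = - X$2$1}"
  proof (intro set_eqI iffI; simp)
    fix X :: "real^2^2"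
    assume "\<exists>k ka. X - k *\<^sub>R mat 1 = ka *\<^sub>R (Eunit 1 2 - Eunit 2 1)"
    then obtain k ka where "X - k *\<^sub>R mat 1 = ka *\<^sub>R (Eunit 1 2 - Eunit 2 1)" by blast
    then show "X $ 1 $ 1 = X $ 2 $ 2 \<and> X $ 1 $ 2 = - X $ 2 $ 1"
      by (auto simp: mat2_eq mat_def)
  next
    fix X :: "real^2^2"
    assume "X $ 1 $ 1 = X $ 2 $ 2 \<and> X $ 1 $ 2 = - X $ 2 $ 1"
    then have "X - (X$1$1) *\<^sub>R mat 1 = (X$1$2) *\<^sub>R (Eunit 1 2 - Eunit 2 1)"
      by (auto simp: mat2_eq mat_def)
    then show "\<exists>k ka. X - k *\<^sub>R mat 1 = ka *\<^sub>R (Eunit 1 2 - Eunit 2 1)" by blast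
  qed
  finally show ?thesis .
qed

lemma V2_char: "V2 = {X. X$1$1 = - X$2$2 \<and> X$1$2 = X$2$1}"
proof -
  have "V2 = {x. \<exists>k. \<exists>ka. x - k *\<^sub>R (Eunit 1 1 - Eunit 2 2) = ka *\<^sub>R (Eunit 1 2 + Eunit 2 1)}"
    unfolding V2_def span_insert span_singleton by auto
  also have "\<dots> = {X. X$1$1 = - X$2$2 \<and> X$1$2 = X$2$1}"
  proof (intro set_eqI iffI; simp)
    fix X :: "real^2^2"
    assume "\<exists>k ka. X - k *\<^sub>R (Eunit 1 1 - Eunit 2 2) = ka *\<^sub>R (Eunit 1 2 + Eunit 2 1)"
    then obtain k ka where "X - k *\<^sub>R (Eunit 1 1 - Eunit 2 2) = ka *\<^sub>R (Eunit 1 2 + Eunit 2 1)" by blast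
    then show "X $ 1 $ 1 = - X $ 2 $ 2 \<and> X $ 1 $ 2 = X $ 2 $ 1"
      by (auto simp: mat2_eq)
  next
    fix X :: "real^2^2"
    assume "X $ 1 $ 1 = - X $ 2 $ 2 \<and> X $ 1 $ 2 = X $ 2 $ 1"
    then have "X - (X$1$1) *\<^sub>R (Eunit 1 1 - Eunit 2 2) = (X$1$2) *\<^sub>R (Eunit 1 2 + Eunit 2 1)"
      by (auto simp: mat2_eq)
    then show "\<exists>k ka. X - k *\<^sub>R (Eunit 1 1 - Eunit 2 2) = ka *\<^sub>R (Eunit 1 2 + Eunit 2 1)" by blast
  qed
  finally show ?thesis .
qed

lemma U2R_char: "U \<in> U2R \<longleftrightarrow> U$1$1^2 + U$2$1^2 = 1 \<and> U$1$2^2 + U$2$2^2 = 1 \<and> U$1$1*U$1$2 + U$2$1*U$2$2 = 0"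
  unfolding U2R_def mat2_eq mmult2r transpose_def mat_def power2_eq_square
  by (auto simp: algebra_simps)

lemma orth_cases:
  fixes a b c d :: real
  assumes h1: "a^2 + c^2 = 1" and h2: "b^2 + d^2 = 1" and h3: "a*b + c*d = 0"
  shows "(a = d \<and> b = -c) \<or> (a = -d \<and> b = c)"
proof -
  define k where "k = a*d - b*c"
  have e: "c*d = -(a*b)" "a*b = -(c*d)" using h3 by linarith+
  have "-c*k = -a*(c*d) + b*c^2" unfolding k_def by (simp add: algebra_simps power2_eq_square)
  also have "\<dots> = b*(a^2+c^2)" by (simp add: e(1) algebra_simps power2_eq_square)
  finally have b: "b = -c*k" using h1 by simp
  have "a*k = d*a^2 - c*(a*b)" unfolding k_def by (simp add: algebra_simps power2_eq_square)
  also have "\<dots> = d*(a^2+c^2)" by (simp add: e(2) algebra_simps power2_eq_square)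
  finally have d: "d = a*k" using h1 by simp
  have "b^2 + d^2 = k^2 * (a^2+c^2)" using b d by (simp add: algebra_simps power2_eq_square)
  then have "k^2 = 1" using h1 h2 by simp
  then have "k = 1 \<or> k = -1" by (simp add: power2_eq_1_iff)
  then show ?thesis using b d by auto
qed

lemma FU2R_char: "FU2R = V1 \<union> V2"
proof (intro set_eqI iffI)
  fix X assume "X \<in> FU2R"
  then obtain g U where X: "X = g *\<^sub>R U" and U: "U \<in> U2R" unfolding FU2R_def by auto
  from U have "(U$1$1 = U$2$2 \<and> U$1$2 = - U$2$1) \<or> (U$1$1 = - U$2$2 \<and> U$1$2 = U$2$1)"
    unfolding U2R_char using orth_cases by blast
  then show "X \<in> V1 \<union> V2" unfolding V1_char V2_char X by auto
next
  fix X assume X: "X \<in> V1 \<union> V2"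
  define r where "r = sqrt (X$1$1^2 + X$2$1^2)"
  show "X \<in> FU2R"
  proof (cases "r = 0")
    case True
    then have "X$1$1 = 0" "X$2$1 = 0" unfolding r_def by (simp_all add: sum_power2_eq_zero_iff)
    with X have "X = 0 *\<^sub>R mat 1" unfolding V1_char V2_char by (auto simp: mat2_eq)
    moreover have "mat 1 \<in> U2R" by (simp add: U2R_def)
    ultimately show ?thesis unfolding FU2R_def by blast
  next
    case False
    have "X$1$1^2 + X$2$1^2 \<noteq> 0" using False unfolding r_def by simp
    moreover have "0 \<le> X$1$1^2 + X$2$1^2" by simp
    ultimately have "X$1$1^2 + X$2$1^2 > 0" by linarith
    then have rpos: "r > 0" unfolding r_def by simp
    have r2: "r^2 = X$1$1^2 + X$2$1^2" unfolding r_def by simp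
    have XX: "X = r *\<^sub>R ((1/r) *\<^sub>R X)" using rpos by simp
    have s2: "X$1$2^2 + X$2$2^2 = r^2" "X$1$1*X$1$2 + X$2$1*X$2$2 = 0"
      using X r2 unfolding V1_char V2_char by (auto simp: algebra_simps power2_eq_square)
    have rr: "r^2 \<noteq> 0" using rpos by simp
    have "(X$1$1/r)^2 + (X$2$1/r)^2 = 1" "(X$1$2/r)^2 + (X$2$2/r)^2 = 1"
      "(X$1$1/r)*(X$1$2/r) + (X$2$1/r)*(X$2$2/r) = 0"
      using r2 s2 rr by (simp_all add: power_divide add_divide_distrib[symmetric])
    then have "(1/r) *\<^sub>R X \<in> U2R" unfolding U2R_char by simp
    with XX show ?thesis unfolding FU2R_def by blast
  qed
qed

lemma img_eq_lemma:
  assumes "linear T" "surj T" "T ` A \<subseteq> P" "T ` B \<subseteq> Q" "\<And>X. \<exists>a\<in>A. \<exists>b\<in>B. X = a + b"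
    "P \<inter> Q \<subseteq> {0}" "subspace P"
  shows "T ` A = P"
proof
  show "T ` A \<subseteq> P" by fact
  show "P \<subseteq> T ` A"
  proof
    fix y assume y: "y \<in> P"
    obtain x where x: "y = T x" using assms(2) by (metis surjD)
    obtain a b where ab: "a \<in> A" "b \<in> B" "x = a + b" using assms(5) by blast
    have Tb: "T b = y - T a" using x ab assms(1) by (simp add: linear_add)
    have "T a \<in> P" using ab assms(3) by blast
    then have "T b \<in> P" using Tb y assms(7) by (simp add: subspace_diff)
    moreover have "T b \<in> Q" using ab assms(4) by blast
    ultimately have "T b = 0" using assms(6) by blast
    then have "y = T a" using Tb by simp
    then show "y \<in> T ` A" using ab by blast
  qed
qed

lemma subspace_V1: "subspace V1" unfolding V1_def by (rule subspace_span)
lemma subspace_V2: "subspace V2" unfolding V2_def by (rule subspace_span)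

lemma V12_decomp: "\<exists>a\<in>V1. \<exists>b\<in>V2. X = a + b"
proof -
  define u where "u = (X$1$1 + X$2$2)/2"
  define v where "v = (X$1$2 - X$2$1)/2"
  define u' where "u' = (X$1$1 - X$2$2)/2"
  define v' where "v' = (X$1$2 + X$2$1)/2"
  define a :: "real^2^2" where "a = vector [vector [u, v], vector [-v, u]]"
  define b :: "real^2^2" where "b = vector [vector [u', v'], vector [v', -u']]"
  have "a \<in> V1" unfolding V1_char a_def by simp
  moreover have "b \<in> V2" unfolding V2_char b_def by simp
  moreover have "X = a + b" unfolding a_def b_def u_def v_def u'_def v'_def by (simp add: mat2_eq field_simps)
  ultimately show ?thesis by blast
qed

lemma V21_decomp: "\<exists>a\<in>V2. \<exists>b\<in>V1. X = a + b"
  using V12_decomp[of X] by (metis add.commute)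

lemma V12_int: "V1 \<inter> V2 \<subseteq> {0}"
  unfolding V1_char V2_char by (auto simp: mat2_eq)

lemma V2_not_V1: "Eunit 1 1 - Eunit 2 2 \<notin> V1"
  unfolding V1_char by simp
lemma V1_not_V2: "mat 1 \<notin> V2"
  unfolding V2_char by (simp add: mat_def)

lemma mat1_V1: "mat 1 \<in> V1" unfolding V1_char by (simp add: mat_def)

lemma prodV: 
  "X \<in> V1 \<Longrightarrow> Y \<in> V1 \<Longrightarrow> X ** Y \<in> V1"
  "X \<in> V1 \<Longrightarrow> Y \<in> V2 \<Longrightarrow> X ** Y \<in> V2"
  "X \<in> V2 \<Longrightarrow> Y \<in> V1 \<Longrightarrow> X ** Y \<in> V2"
  "X \<in> V2 \<Longrightarrow> Y \<in> V2 \<Longrightarrow> X ** Y \<in> V1"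
  unfolding V1_char V2_char by (auto simp: mmult2r algebra_simps)

lemma transV: "X \<in> V1 \<Longrightarrow> transpose X \<in> V1" "X \<in> V2 \<Longrightarrow> transpose X \<in> V2"
  unfolding V1_char V2_char by (auto simp: transpose_def)

lemma U2R_inv: "W \<in> U2R \<Longrightarrow> W ** transpose W = mat 1"
  unfolding U2R_def using matrix_left_right_inverse by blast

lemma U2R_mult: "W \<in> U2R \<Longrightarrow> Qo \<in> U2R \<Longrightarrow> W ** Qo \<in> U2R"
  unfolding U2R_def by (simp add: matrix_transpose_mul matrix_mul_assoc)
    (metis matrix_mul_assoc matrix_mul_lid)

lemma matrix_inv_U2R:
  assumes "\<gamma> \<noteq> 0" "W \<in> U2R"
  shows "matrix_inv (\<gamma> *\<^sub>R W) = (1/\<gamma>) *\<^sub>R transpose W"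
  apply (rule matrix_inv_eq)
  using assms U2R_inv[OF assms(2)] by (simp add: matrix_scalar_ac scalar_matrix_assoc[symmetric])

lemma L_image:
  fixes T :: "'a \<Rightarrow> real^2^2"
  assumes g: "\<gamma> \<noteq> 0" and W: "W \<in> U2R" and TA: "T ` A = P"
    and h1: "\<forall>Y\<in>P. transpose W ** Y \<in> B" and h2: "\<forall>Z\<in>B. W ** Z \<in> P"
    and sB: "subspace B" and sP: "subspace P"
  shows "(\<lambda>X. matrix_inv (\<gamma> *\<^sub>R W) ** T X) ` A = B"
proof -
  have e: "matrix_inv (\<gamma> *\<^sub>R W) ** Y = (1/\<gamma>) *\<^sub>R (transpose W ** Y)" for Y :: "real^2^2"
    using matrix_inv_U2R[OF g W] by (simp add: scalar_matrix_assoc)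
  show ?thesis
  proof
    show "(\<lambda>X. matrix_inv (\<gamma> *\<^sub>R W) ** T X) ` A \<subseteq> B"
    proof
      fix Z assume "Z \<in> (\<lambda>X. matrix_inv (\<gamma> *\<^sub>R W) ** T X) ` A"
      then obtain X where X: "X \<in> A" "Z = matrix_inv (\<gamma> *\<^sub>R W) ** T X" by blast
      have "T X \<in> P" using X TA by blast
      then have "transpose W ** T X \<in> B" using h1 by blast
      then show "Z \<in> B" using X e sB by (simp add: subspace_scale)
    qed
    show "B \<subseteq> (\<lambda>X. matrix_inv (\<gamma> *\<^sub>R W) ** T X) ` A"
    proof
      fix Z assume Z: "Z \<in> B"
      have "\<gamma> *\<^sub>R (W ** Z) \<in> P" using h2 Z sP by (simp add: subspace_scale)
      then obtain X where X: "X \<in> A" "T X = \<gamma> *\<^sub>R (W ** Z)" using TA by force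
      have "matrix_inv (\<gamma> *\<^sub>R W) ** T X = (1/\<gamma>) *\<^sub>R (transpose W ** (\<gamma> *\<^sub>R (W ** Z)))"
        using e X(2) by simp
      also have "\<dots> = (transpose W ** W) ** Z" using g by (simp add: matrix_scalar_ac matrix_mul_assoc scalar_matrix_assoc[symmetric])
      also have "\<dots> = Z" using W unfolding U2R_def by simp
      finally have "matrix_inv (\<gamma> *\<^sub>R W) ** T X = Z" .
      then show "Z \<in> (\<lambda>X. matrix_inv (\<gamma> *\<^sub>R W) ** T X) ` A" using X by force
    qed
  qed
qed

lemma real_part:
  fixes T :: "real^2^2 \<Rightarrow> real^2^2"
  assumes lin: "linear T" and bij: "bij T"
  shows "T ` U2R \<subseteq> FU2R \<longleftrightarrow>
        (\<exists>\<gamma> W. \<gamma> \<noteq> 0 \<and> W \<in> U2R \<and> T (mat 1) = \<gamma> *\<^sub>R W) \<and>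
        (let L = (\<lambda>X. matrix_inv (T (mat 1)) ** T X) in L ` V1 = V1 \<and> L ` V2 = V2)"
proof
  assume h: "T ` U2R \<subseteq> FU2R"
  have inj: "inj T" and surj: "surj T" using bij by (auto simp: bij_def)
  have hF: "T X \<in> V1 \<union> V2" if "X \<in> V1 \<union> V2" for X
  proof -
    have "X \<in> FU2R" using that FU2R_char by simp
    then obtain g U where X: "X = g *\<^sub>R U" and U: "U \<in> U2R" unfolding FU2R_def by auto
    have "T U \<in> FU2R" using h U by blast
    then obtain g' U' where "T U = g' *\<^sub>R U'" "U' \<in> U2R" unfolding FU2R_def by auto
    then have "T X = (g * g') *\<^sub>R U'" using X lin by (simp add: linear_scale)
    then have "T X \<in> FU2R" using \<open>U' \<in> U2R\<close> unfolding FU2R_def by blast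
    then show ?thesis using FU2R_char by simp
  qed
  have I: "mat 1 \<in> U2R" by (simp add: U2R_def)
  have "T (mat 1) \<in> FU2R" using h I by blast
  then obtain \<gamma> W where TI: "T (mat 1) = \<gamma> *\<^sub>R W" and W: "W \<in> U2R" unfolding FU2R_def by auto
  have "T (mat 1) \<noteq> 0"
  proof
    assume "T (mat 1) = 0"
    then have "T (mat 1) = T 0" using lin by (simp add: linear_0)
    then have "(mat 1 :: real^2^2) = 0" using inj by (simp add: inj_eq)
    then show False by (simp add: mat2_eq mat_def)
  qed
  then have g: "\<gamma> \<noteq> 0" using TI by auto
  have sub1: "subspace (T ` V1)" using lin subspace_V1 by (rule linear_subspace_image)
  have sub2: "subspace (T ` V2)" using lin subspace_V2 by (rule linear_subspace_image)
  have c1: "T ` V1 \<subseteq> V1 \<or> T ` V1 \<subseteq> V2"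
    by (rule subspace_union2[OF subspace_V1 subspace_V2 sub1]) (use hF in blast)
  have c2: "T ` V2 \<subseteq> V1 \<or> T ` V2 \<subseteq> V2"
    by (rule subspace_union2[OF subspace_V1 subspace_V2 sub2]) (use hF in blast)
  have notboth: False if "T ` V1 \<subseteq> P" "T ` V2 \<subseteq> P" "subspace P" "P \<noteq> UNIV" for P
  proof -
    have "T X \<in> P" for X
    proof -
      obtain a b where "a \<in> V1" "b \<in> V2" "X = a + b" using V12_decomp by blast
      then show ?thesis using that lin by (auto simp: linear_add intro!: subspace_add)
    qed
    then show False using surj that(4) by (metis UNIV_eq_I surjD)
  qed
  have V1U: "V1 \<noteq> UNIV" using V2_not_V1 by blast
  have V2U: "V2 \<noteq> UNIV" using V1_not_V2 by blast
  have V21: "V2 \<inter> V1 \<subseteq> {0}" using V12_int by blast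
  have cases: "(T ` V1 = V1 \<and> T ` V2 = V2) \<or> (T ` V1 = V2 \<and> T ` V2 = V1)"
  proof (cases "T ` V1 \<subseteq> V1")
    case True
    then have "T ` V2 \<subseteq> V2" using c2 notboth[OF True _ subspace_V1 V1U] by blast
    then show ?thesis using True
      img_eq_lemma[OF lin surj True _ V12_decomp V12_int subspace_V1]
      img_eq_lemma[OF lin surj _ True V21_decomp V21 subspace_V2] by blast
  next
    case False
    then have F: "T ` V1 \<subseteq> V2" using c1 by blast
    then have "T ` V2 \<subseteq> V1" using c2 notboth[OF F _ subspace_V2 V2U] by blast
    then show ?thesis using F
      img_eq_lemma[OF lin surj F _ V12_decomp V21 subspace_V2]
      img_eq_lemma[OF lin surj _ F V21_decomp V12_int subspace_V1] by blast
  qed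
  have WT: "W = (1/\<gamma>) *\<^sub>R T (mat 1)" using TI g by simp
  have TIV: "T (mat 1) \<in> T ` V1" using mat1_V1 by blast
  have L: "(let L = (\<lambda>X. matrix_inv (T (mat 1)) ** T X) in L ` V1 = V1 \<and> L ` V2 = V2)"
    using cases
  proof
    assume a: "T ` V1 = V1 \<and> T ` V2 = V2"
    then have "W \<in> V1" using WT TIV subspace_V1 by (auto simp: subspace_scale)
    then have "transpose W \<in> V1" by (rule transV)
    have "(\<lambda>X. matrix_inv (\<gamma> *\<^sub>R W) ** T X) ` V1 = V1"
      by (rule L_image[OF g W, of T V1 V1 V1]) (use a \<open>W \<in> V1\<close> \<open>transpose W \<in> V1\<close> subspace_V1 prodV in auto)
    moreover have "(\<lambda>X. matrix_inv (\<gamma> *\<^sub>R W) ** T X) ` V2 = V2"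
      by (rule L_image[OF g W, of T V2 V2 V2]) (use a \<open>W \<in> V1\<close> \<open>transpose W \<in> V1\<close> subspace_V2 prodV in auto)
    ultimately show ?thesis unfolding Let_def TI by simp
  next
    assume a: "T ` V1 = V2 \<and> T ` V2 = V1"
    then have "W \<in> V2" using WT TIV subspace_V2 by (auto simp: subspace_scale)
    then have "transpose W \<in> V2" by (rule transV)
    have "(\<lambda>X. matrix_inv (\<gamma> *\<^sub>R W) ** T X) ` V1 = V1"
      by (rule L_image[OF g W, of T V1 V2 V1]) (use a \<open>W \<in> V2\<close> \<open>transpose W \<in> V2\<close> subspace_V1 subspace_V2 prodV in auto)
    moreover have "(\<lambda>X. matrix_inv (\<gamma> *\<^sub>R W) ** T X) ` V2 = V2"
      by (rule L_image[OF g W, of T V2 V1 V2]) (use a \<open>W \<in> V2\<close> \<open>transpose W \<in> V2\<close> subspace_V1 subspace_V2 prodV in auto)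
    ultimately show ?thesis unfolding Let_def TI by simp
  qed
  show "(\<exists>\<gamma> W. \<gamma> \<noteq> 0 \<and> W \<in> U2R \<and> T (mat 1) = \<gamma> *\<^sub>R W) \<and>
        (let L = (\<lambda>X. matrix_inv (T (mat 1)) ** T X) in L ` V1 = V1 \<and> L ` V2 = V2)"
    using g W TI L by blast
next
  assume "(\<exists>\<gamma> W. \<gamma> \<noteq> 0 \<and> W \<in> U2R \<and> T (mat 1) = \<gamma> *\<^sub>R W) \<and>
        (let L = (\<lambda>X. matrix_inv (T (mat 1)) ** T X) in L ` V1 = V1 \<and> L ` V2 = V2)"
  then obtain \<gamma> W where g: "\<gamma> \<noteq> 0" and W: "W \<in> U2R" and TI: "T (mat 1) = \<gamma> *\<^sub>R W"
    and L1: "(\<lambda>X. matrix_inv (T (mat 1)) ** T X) ` V1 = V1"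
    and L2: "(\<lambda>X. matrix_inv (T (mat 1)) ** T X) ` V2 = V2" unfolding Let_def by blast
  show "T ` U2R \<subseteq> FU2R"
  proof
    fix Y assume "Y \<in> T ` U2R"
    then obtain U where U: "U \<in> U2R" "Y = T U" by blast
    have "U \<in> FU2R" unfolding FU2R_def using U by (metis (mono_tags, lifting) mem_Collect_eq scaleR_one)
    then have "U \<in> V1 \<union> V2" using FU2R_char by simp
    then have "matrix_inv (T (mat 1)) ** T U \<in> V1 \<union> V2" using L1 L2 by blast
    then have "matrix_inv (T (mat 1)) ** T U \<in> FU2R" using FU2R_char by simp
    then obtain c Qo where cO: "matrix_inv (T (mat 1)) ** T U = c *\<^sub>R Qo" "Qo \<in> U2R"
      unfolding FU2R_def by auto
    have "T U = T (mat 1) ** (matrix_inv (T (mat 1)) ** T U)"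
      unfolding TI matrix_inv_U2R[OF g W] using g U2R_inv[OF W]
      by (simp add: matrix_scalar_ac scalar_matrix_assoc[symmetric] matrix_mul_assoc)
    also have "\<dots> = T (mat 1) ** (c *\<^sub>R Qo)" using cO(1) by simp
    also have "\<dots> = (\<gamma> * c) *\<^sub>R (W ** Qo)" unfolding TI
      by (simp add: matrix_scalar_ac scalar_matrix_assoc[symmetric])
    finally have "T U = (\<gamma> * c) *\<^sub>R (W ** Qo)" .
    moreover have "W ** Qo \<in> U2R" using W cO(2) by (rule U2R_mult)
    ultimately show "Y \<in> FU2R" using U unfolding FU2R_def by blast
  qed
qed


theorem mainTheorem8:
  shows
  "(\<forall>T :: real^2^2 \<Rightarrow> real^2^2. linear T \<and> bij T \<longrightarrow>
      (T ` U2R \<subseteq> FU2R \<longleftrightarrow>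
        (\<exists>\<gamma> W. \<gamma> \<noteq> 0 \<and> W \<in> U2R \<and> T (mat 1) = \<gamma> *\<^sub>R W) \<and>
        (let L = (\<lambda>X. matrix_inv (T (mat 1)) ** T X) in L ` V1 = V1 \<and> L ` V2 = V2))) \<and>
   (\<forall>T :: complex^2^2 \<Rightarrow> complex^2^2. linear T \<and> bij T \<longrightarrow>
      (T ` U2C \<subseteq> FU2C \<longleftrightarrow>
        (\<exists>\<gamma> W. \<gamma> \<noteq> 0 \<and> W \<in> U2C \<and> T (mat 1) = csmult \<gamma> W) \<and>
        (let L = (\<lambda>X. matrix_inv (T (mat 1)) ** T X) in
           \<exists>U V \<mu> a b. caseII L U V \<mu> a b))) \<and>
   (\<forall>T :: complex^2^2 \<Rightarrow> complex^2^2. linear T \<and> bij T \<and> complex_linear T \<and>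
      T ` U2C \<subseteq> FU2C \<longrightarrow>
      (\<forall>U V \<mu> a b. caseII (\<lambda>X. matrix_inv (T (mat 1)) ** T X) U V \<mu> a b \<longrightarrow> \<mu> = \<i>))"
  proof (intro conjI allI impI)
  fix T :: "real^2^2 \<Rightarrow> real^2^2"
  assume "linear T \<and> bij T"
  then show "T ` U2R \<subseteq> FU2R \<longleftrightarrow>
        (\<exists>\<gamma> W. \<gamma> \<noteq> 0 \<and> W \<in> U2R \<and> T (mat 1) = \<gamma> *\<^sub>R W) \<and>
        (let L = (\<lambda>X. matrix_inv (T (mat 1)) ** T X) in L ` V1 = V1 \<and> L ` V2 = V2)"
    using real_part by blast
next
  fix T :: "complex^2^2 \<Rightarrow> complex^2^2"
  assume "linear T \<and> bij T"
  then show "T ` U2C \<subseteq> FU2C \<longleftrightarrow>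
        (\<exists>\<gamma> W. \<gamma> \<noteq> 0 \<and> W \<in> U2C \<and> T (mat 1) = csmult \<gamma> W) \<and>
        (let L = (\<lambda>X. matrix_inv (T (mat 1)) ** T X) in
           \<exists>U V \<mu> a b. caseII L U V \<mu> a b)"
    using complex_part by blast
next
  fix T :: "complex^2^2 \<Rightarrow> complex^2^2" and U V \<mu> a b
  assume "linear T \<and> bij T \<and> complex_linear T \<and> T ` U2C \<subseteq> FU2C"
    and "caseII (\<lambda>X. matrix_inv (T (mat 1)) ** T X) U V \<mu> a b"
  then show "\<mu> = \<i>" using complex_mu by blast
qed

end
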